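(* Let $U\not\subseteq\mathbb O(d)$ be a closed subgroup of $\mathbb S(d)$, $\alpha>0$, and let $\bar\nu$ be a Lévy measure on $\mathbb R^d\setminus\{0\}$. The following are equivalent: (i) $\bar\nu(gB)=\|g\|^{-\alpha}\bar\nu(B)$ for all $g\in U$ and all Borel $B\subseteq\mathbb R^d\setminus\{0\}$; (ii) there is a $C_U$-invariant finite measure $\rho$ on $S_U$ such that for all $\bar\nu$-integrable $f:\mathbb R^d\setminus\{0\}\to\mathbb R$, $$\int f(x)\,\bar\nu(dx)=\int_{A_U}\int_{S_U}f(ax)\|a\|^{-\alpha}\rho(dx)\,H_{A_U}(da).$$
   Context: $\mathbb S(d)$: group of similarity matrices $to$ ($t>0$, $o\in\mathbb O(d)$), $\|\cdot\|$ operator norm. Structure (known): with $C_U=U\cap\mathbb O(d)$ and $G=\{\|u\|:u\in U\}$, either $G=r^{\mathbb Z}$ for some $0<r<1$ (discrete case) or $G=(0,\infty)$ (continuous case); there is a closed subgroup $A_U\subseteq U$ isomorphic to $G$ with $U=A_U\ltimes C_U$, where $A_U=\{A^n:n\in\mathbb Z\}$ with $\|A\|=r$ in the discrete case and $A_U=\{t^Q:t>0\}$, $t^Q=e^{(\ln t)Q}$, with $Q$ commuting with $C_U$ in the continuous case. $S_U=\mathbb S^{d-1}$ in the continuous case and $S_U=\{x:r\le|x|<1\}$ in the discrete case. $\rho$ is $C_U$-invariant if $\rho(oB)=\rho(B)$ for all $o\in C_U$. $H_{A_U}$ is Haar measure on $A_U$, normalized as counting measure in the discrete case and such that its image under $a\mapsto\|a\|$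 is $dt/t$ in the continuous case. *)

theory Defs
  imports "HOL-Analysis.Analysis"
begin

text \<open>Operator norm of a square matrix acting on Euclidean space.\<close>
definition opnorm :: "real^'n^'n \<Rightarrow> real" where
  "opnorm M = onorm (\<lambda>x. M *v x)"

text \<open>The similarity group S(d): matrices t o with t > 0 and o orthogonal.\<close>
definition similarity_matrices :: "(real^'n^'n) set" where
  "similarity_matrices = {t *\<^sub>R M | t M. t > 0 \<and> orthogonal_matrix M}"

definition orthogonal_matrices :: "(real^'n^'n) set" where
  "orthogonal_matrices = {M. orthogonal_matrix M}"

text \<open>Subgroup of the general linear group (contains identity, closed under
  products and inverses).\<close>
definition matrix_subgroup :: "(real^'n^'n) set \<Rightarrow> bool" where
  "matrix_subgroup U \<longleftrightarrow> mat 1 \<in> U \<and> (\<forall>a\<in>U. \<forall>b\<in>U. a ** b \<in> U)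
      \<and> (\<forall>a\<in>U. invertible a \<and> matrix_inv a \<in> U)"

text \<open>Natural and integer matrix powers.\<close>
primrec matpow :: "real^'n^'n \<Rightarrow> nat \<Rightarrow> real^'n^'n" where
  "matpow A 0 = mat 1"
| "matpow A (Suc k) = A ** matpow A k"

definition matpowi :: "real^'n^'n \<Rightarrow> int \<Rightarrow> real^'n^'n" where
  "matpowi A n = (if n \<ge> 0 then matpow A (nat n) else matpow (matrix_inv A) (nat (- n)))"

text \<open>Matrix exponential e^M and t^Q = e^{(ln t) Q}.\<close>
definition matexp :: "real^'n^'n \<Rightarrow> real^'n^'n" where
  "matexp M = (\<Sum>k. (1 / fact k) *\<^sub>R matpow M k)"

definition matrpow :: "real \<Rightarrow> real^'n^'n \<Rightarrow> real^'n^'n" where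
  "matrpow t Q = matexp (ln t *\<^sub>R Q)"

text \<open>C_U = U \<inter> O(d) and G = {\<parallel>u\<parallel> : u \<in> U}.\<close>
definition CU :: "(real^'n^'n) set \<Rightarrow> (real^'n^'n) set" where
  "CU U = U \<inter> orthogonal_matrices"

definition GU :: "(real^'n^'n) set \<Rightarrow> real set" where
  "GU U = opnorm ` U"

text \<open>Levy measure on R^d \ {0}, encoded as a Borel measure on R^d with no mass at 0.\<close>
definition levy_measure :: "(real^'n) measure \<Rightarrow> bool" where
  "levy_measure M \<longleftrightarrow> sets M = sets borel \<and> emeasure M {0} = 0 \<and>
     (\<integral>\<^sup>+ x. ennreal (min 1 (norm x ^ 2)) \<partial>M) < \<infinity>"

text \<open>Haar measure on A_U in the continuous case: image of dt/t on (0,\<infinity>)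
  under the inverse of a \<mapsto> \<parallel>a\<parallel> on A_U.\<close>
definition haar_cont :: "(real^'n^'n) set \<Rightarrow> (real^'n^'n) measure" where
  "haar_cont AU = distr (density (restrict_space lborel {0<..}) (\<lambda>t. ennreal (1 / t)))
      borel (\<lambda>t. THE a. a \<in> AU \<and> opnorm a = t)"

end

theory Submission
  imports Defs
begin

(* ---- a/PA ---- *)
lemma minv:
  fixes A :: "real^'n^'n"
  assumes "invertible A"
  shows "A ** matrix_inv A = mat 1" "matrix_inv A ** A = mat 1"
proof -
  have "\<exists>A'. A ** A' = mat 1 \<and> A' ** A = mat 1" using assms unfolding invertible_def by blast
  hence "A ** matrix_inv A = mat 1 \<and> matrix_inv A ** A = mat 1"
    unfolding matrix_inv_def by (rule someI_ex)
  thus "A ** matrix_inv A = mat 1" "matrix_inv A ** A = mat 1" by auto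
qed

lemma orth_norm: "orthogonal_matrix (M::real^'n^'n) \<Longrightarrow> norm (M *v x) = norm x"
  by (metis (no_types, lifting) dot_matrix_vector_mul matrix_vector_mul_lid
    norm_eq orthogonal_matrix_def orthogonal_matrix_id)

lemma opnorm_eq:
  fixes M :: "real^'n^'n"
  assumes "\<And>x. norm (M *v x) = c * norm x"
  shows "opnorm M = c"
proof -
  have c0: "c \<ge> 0" using assms[of "axis undefined 1"] by (metis norm_axis_1 norm_ge_zero mult.right_neutral)
  have "opnorm M \<le> c" unfolding opnorm_def by (rule onorm_le) (simp add: assms)
  moreover have "c \<le> opnorm M"
  proof -
    have "norm (M *v axis undefined 1) \<le> onorm ((*v) M) * norm (axis undefined (1::real) :: real^'n)"
      using onorm[OF matrix_vector_mul_bounded_linear, of M "axis undefined 1"] by simp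
    thus ?thesis using assms[of "axis undefined 1"] by (simp add: opnorm_def norm_axis_1)
  qed
  ultimately show ?thesis by simp
qed

lemma sim_norm:
  fixes g :: "real^'n^'n"
  assumes "g \<in> similarity_matrices"
  shows "norm (g *v x) = opnorm g * norm x" "opnorm g > 0"
proof -
  obtain t M where g: "g = t *\<^sub>R M" "t > 0" "orthogonal_matrix M"
    using assms unfolding similarity_matrices_def by blast
  have n: "\<And>x. norm (g *v x) = t * norm x"
    using g by (simp add: scaleR_matrix_vector_assoc[symmetric] orth_norm)
  have "opnorm g = t" by (rule opnorm_eq[OF n])
  thus "norm (g *v x) = opnorm g * norm x" "opnorm g > 0" using n g by auto
qed

lemma sim_opnorm1_orth:
  fixes g :: "real^'n^'n"
  assumes "g \<in> similarity_matrices" "opnorm g = 1"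
  shows "orthogonal_matrix g"
proof -
  obtain t M where g: "g = t *\<^sub>R M" "t > 0" "orthogonal_matrix M"
    using assms unfolding similarity_matrices_def by blast
  have n: "\<And>x. norm (g *v x) = t * norm x"
    using g by (simp add: scaleR_matrix_vector_assoc[symmetric] orth_norm)
  have "opnorm g = t" by (rule opnorm_eq[OF n])
  thus ?thesis using g assms by simp
qed

lemma orth_opnorm: "orthogonal_matrix (M::real^'n^'n) \<Longrightarrow> opnorm M = 1"
  by (rule opnorm_eq) (simp add: orth_norm)

lemma opnorm_id: "opnorm (mat 1 :: real^'n^'n) = 1"
  by (rule orth_opnorm[OF orthogonal_matrix_id])

locale simgrp =
  fixes U :: "(real^'n^'n) set"
  assumes sg: "matrix_subgroup U" and ssim: "U \<subseteq> similarity_matrices"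
begin

lemma one_in: "mat 1 \<in> U" using sg unfolding matrix_subgroup_def by blast
lemma mult_in: "a \<in> U \<Longrightarrow> b \<in> U \<Longrightarrow> a ** b \<in> U" using sg unfolding matrix_subgroup_def by blast
lemma inv_in: "a \<in> U \<Longrightarrow> matrix_inv a \<in> U" using sg unfolding matrix_subgroup_def by blast
lemma invertible: "a \<in> U \<Longrightarrow> invertible a" using sg unfolding matrix_subgroup_def by blast
lemma rinv: "a \<in> U \<Longrightarrow> a ** matrix_inv a = mat 1" using minv invertible by blast
lemma linv: "a \<in> U \<Longrightarrow> matrix_inv a ** a = mat 1" using minv invertible by blast
lemma normv: "a \<in> U \<Longrightarrow> norm (a *v x) = opnorm a * norm x" using sim_norm ssim by blast
lemma pos: "a \<in> U \<Longrightarrow> opnorm a > 0" using sim_norm ssim by blast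

lemma opnorm_mult: "a \<in> U \<Longrightarrow> b \<in> U \<Longrightarrow> opnorm (a ** b) = opnorm a * opnorm b"
  by (rule opnorm_eq) (simp add: matrix_vector_mul_assoc[symmetric] normv)

lemma opnorm_inv: "a \<in> U \<Longrightarrow> opnorm (matrix_inv a) = 1 / opnorm a"
proof -
  assume a: "a \<in> U"
  have "opnorm (a ** matrix_inv a) = 1" using rinv[OF a] opnorm_id by simp
  hence "opnorm a * opnorm (matrix_inv a) = 1" using opnorm_mult[OF a inv_in[OF a]] by simp
  thus ?thesis using pos[OF a] by (simp add: field_simps)
qed

lemma inv_app: "a \<in> U \<Longrightarrow> matrix_inv a *v (a *v x) = x"
  by (simp add: matrix_vector_mul_assoc linv)
lemma app_inv: "a \<in> U \<Longrightarrow> a *v (matrix_inv a *v x) = x"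
  by (simp add: matrix_vector_mul_assoc rinv)

lemma orth_iff: "a \<in> U \<Longrightarrow> orthogonal_matrix a \<longleftrightarrow> opnorm a = 1"
  using sim_opnorm1_orth orth_opnorm ssim by blast

end

(* ---- b/PB ---- *)
locale grp = simgrp U for U :: "(real^'n^'n) set" +
  fixes AU :: "(real^'n^'n) set"
  assumes AU_sg: "matrix_subgroup AU" and AU_sub: "AU \<subseteq> U"
    and semidirect: "\<forall>u\<in>U. \<exists>a\<in>AU. \<exists>c\<in>CU U. u = a ** c"
    and AU_CU: "AU \<inter> CU U = {mat 1}"
begin

lemma A_one: "mat 1 \<in> AU" using AU_sg unfolding matrix_subgroup_def by blast
lemma A_mult: "a \<in> AU \<Longrightarrow> b \<in> AU \<Longrightarrow> a ** b \<in> AU" using AU_sg unfolding matrix_subgroup_def by blast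
lemma A_inv: "a \<in> AU \<Longrightarrow> matrix_inv a \<in> AU" using AU_sg unfolding matrix_subgroup_def by blast
lemma A_U: "a \<in> AU \<Longrightarrow> a \<in> U" using AU_sub by blast

lemma CU_iff: "c \<in> CU U \<longleftrightarrow> c \<in> U \<and> opnorm c = 1"
  using orth_iff unfolding CU_def orthogonal_matrices_def by blast

lemma CU_inv: "c \<in> CU U \<Longrightarrow> matrix_inv c \<in> CU U"
  using CU_iff inv_in opnorm_inv by auto

lemma CU_conj: "a \<in> U \<Longrightarrow> c \<in> CU U \<Longrightarrow> matrix_inv a ** c ** a \<in> CU U"
proof -
  assume a: "a \<in> U" and c: "c \<in> CU U"
  hence cU: "c \<in> U" "opnorm c = 1" using CU_iff by auto
  have "opnorm (matrix_inv a ** c ** a) = opnorm (matrix_inv a ** c) * opnorm a"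
    using opnorm_mult mult_in inv_in a cU by blast
  also have "\<dots> = 1" using opnorm_mult inv_in a cU opnorm_inv pos[OF a] by simp
  finally have "opnorm (matrix_inv a ** c ** a) = 1" .
  moreover have "matrix_inv a ** c ** a \<in> U" using mult_in inv_in a cU(1) by blast
  ultimately show ?thesis using CU_iff by blast
qed

lemma A_inj: assumes "a \<in> AU" "b \<in> AU" "opnorm a = opnorm b" shows "a = b"
proof -
  let ?c = "matrix_inv a ** b"
  have cA: "?c \<in> AU" using A_inv A_mult assms by blast
  have "opnorm ?c = opnorm (matrix_inv a) * opnorm b"
    using opnorm_mult inv_in A_U assms by blast
  also have "\<dots> = 1" using opnorm_inv[OF A_U[OF assms(1)]] assms(3) pos[OF A_U[OF assms(1)]] by simp
  finally have "opnorm ?c = 1" .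
  hence "?c \<in> CU U" using CU_iff cA A_U by blast
  hence "?c = mat 1" using AU_CU cA by blast
  hence "a ** ?c = a" by (simp add: matrix_mul_rid)
  thus ?thesis by (simp add: matrix_mul_assoc rinv A_U assms(1) matrix_mul_lid)
qed

lemma A_comm: "a \<in> AU \<Longrightarrow> b \<in> AU \<Longrightarrow> a ** b = b ** a"
  by (rule A_inj) (auto simp: A_mult opnorm_mult A_U)

lemma decomp: assumes "g \<in> U"
  obtains a c where "a \<in> AU" "c \<in> CU U" "g = a ** c" "opnorm g = opnorm a"
proof -
  obtain a c where ac: "a \<in> AU" "c \<in> CU U" "g = a ** c" using semidirect assms by blast
  have "opnorm g = opnorm a" using ac opnorm_mult[of a c] CU_iff A_U by auto
  thus ?thesis using ac that by blast
qed

lemma GU_A: assumes "t \<in> GU U" obtains a where "a \<in> AU" "opnorm a = t"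
proof -
  obtain g where "g \<in> U" "opnorm g = t" using assms unfolding GU_def by blast
  thus ?thesis using decomp that by metis
qed

lemma A_GU: "a \<in> AU \<Longrightarrow> opnorm a \<in> GU U" unfolding GU_def using A_U by blast

lemma comm_conj: "a \<in> U \<Longrightarrow> c \<in> U \<Longrightarrow> c ** a = a ** (matrix_inv a ** c ** a)"
proof -
  assume a: "a \<in> U"
  have "a ** (matrix_inv a ** c ** a) = (a ** matrix_inv a) ** (c ** a)" by (simp add: matrix_mul_assoc)
  thus ?thesis by (simp add: rinv[OF a] matrix_mul_lid)
qed

end

(* ---- c/PC ---- *)
lemma mv_cont: "continuous_on UNIV (\<lambda>p::(real^'n^'m) \<times> (real^'n). fst p *v snd p)"
  unfolding matrix_vector_mult_def
  by (intro continuous_on_vec_lambda continuous_intros)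

lemma mv_meas[measurable]: "(\<lambda>p::(real^'n^'m) \<times> (real^'n). fst p *v snd p) \<in> borel_measurable borel"
  using mv_cont by (rule borel_measurable_continuous_onI)

lemma mm_cont: "continuous_on UNIV (\<lambda>p::(real^'n^'m) \<times> (real^'k^'n). fst p ** snd p)"
  unfolding matrix_matrix_mult_def
  by (intro continuous_on_vec_lambda continuous_intros)

lemma mm_meas[measurable]: "(\<lambda>p::(real^'n^'m) \<times> (real^'k^'n). fst p ** snd p) \<in> borel_measurable borel"
  using mm_cont by (rule borel_measurable_continuous_onI)

lemma opnorm_le_norm: "opnorm (M::real^'n^'n) \<le> real CARD('n) * real CARD('n) * norm M"
  unfolding opnorm_def
proof (rule onorm_le_matrix_component)
  fix i j
  have "\<bar>M $ i $ j\<bar> \<le> norm (M $ i)" by (rule component_le_norm_cart)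
  also have "\<dots> \<le> norm M" by (simp add: Finite_Cartesian_Product.norm_nth_le)
  finally show "\<bar>M $ i $ j\<bar> \<le> norm M" .
qed

lemma opnorm_lip: "\<bar>opnorm (A::real^'n^'n) - opnorm B\<bar> \<le> real CARD('n) * real CARD('n) * norm (A - B)"
proof -
  have tri: "opnorm (X + Y) \<le> opnorm X + opnorm Y" for X Y :: "real^'n^'n"
  proof -
    have "onorm (\<lambda>x. X *v x + Y *v x) \<le> onorm ((*v) X) + onorm ((*v) Y)"
      by (rule onorm_triangle) (rule matrix_vector_mul_bounded_linear)+
    moreover have "(\<lambda>x. X *v x + Y *v x) = (*v) (X + Y)"
      by (rule ext) (simp add: matrix_vector_mult_add_rdistrib)
    ultimately show ?thesis unfolding opnorm_def by simp
  qed
  have "opnorm A \<le> opnorm (A - B) + opnorm B" using tri[of "A - B" B] by simp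
  moreover have "opnorm B \<le> opnorm (B - A) + opnorm A" using tri[of "B - A" A] by simp
  moreover have "opnorm (B - A) \<le> real CARD('n) * real CARD('n) * norm (A - B)"
    using opnorm_le_norm[of "B - A"] by (simp add: norm_minus_commute)
  ultimately show ?thesis using opnorm_le_norm[of "A - B"] by (simp add: abs_le_iff)
qed

lemma opnorm_cont: "continuous_on UNIV (opnorm :: real^'n^'n \<Rightarrow> real)"
proof (rule lipschitz_on_continuous_on)
  show "(real CARD('n) * real CARD('n))-lipschitz_on UNIV (opnorm :: real^'n^'n \<Rightarrow> real)"
    by (rule lipschitz_onI) (auto simp: dist_norm opnorm_lip)
qed

lemma opnorm_meas[measurable]: "(opnorm :: real^'n^'n \<Rightarrow> real) \<in> borel_measurable borel"
  using opnorm_cont by (rule borel_measurable_continuous_onI)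

(* ---- d/PD ---- *)
lemma mv_fix_meas[measurable]: "((*v) (a::real^'n^'m)) \<in> borel_measurable borel"
  by (rule borel_measurable_continuous_onI) (rule matrix_vector_mult_linear_continuous_on)

lemma pi_meas_gen: 
  assumes "(P :: real \<Rightarrow> real^'n^'n) \<in> borel_measurable borel"
  shows "(\<lambda>y::real^'n. P (norm y) *v y) \<in> borel_measurable borel"
proof -
  have "(\<lambda>y::real^'n. (P (norm y), y)) \<in> measurable borel (borel \<Otimes>\<^sub>M borel)"
    using assms by measurable
  hence "(\<lambda>y::real^'n. (P (norm y), y)) \<in> measurable borel borel" by (simp add: borel_prod)
  from measurable_compose[OF this mv_meas] show ?thesis by simp
qed

context simgrp begin
lemma img_preimg: "a \<in> U \<Longrightarrow> (\<lambda>x. a *v x) ` B = (\<lambda>x. matrix_inv a *v x) -` B"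
  by (auto simp: inv_app) (metis app_inv image_eqI)
end

locale hgrp = grp U AU for U AU :: "(real^'n^'n) set" +
  fixes H :: "(real^'n^'n) measure"
  assumes H_sf: "sigma_finite_measure H"
    and H_AE: "AE a in H. a \<in> AU"
    and H_inv: "\<And>a0. a0 \<in> AU \<Longrightarrow> distr H H (\<lambda>a. a0 ** a) = H"
    and H_mult: "\<And>a0. a0 \<in> AU \<Longrightarrow> (\<lambda>a. a0 ** a) \<in> measurable H H"
    and H_Phi: "(\<lambda>p. fst p *v snd p) \<in> borel_measurable (H \<Otimes>\<^sub>M (borel :: (real^'n) measure))"
    and H_norm: "opnorm \<in> borel_measurable H"
begin

lemma Phi_comp:
  assumes "(\<lambda>z. (g1 z, g2 z)) \<in> measurable M (H \<Otimes>\<^sub>M borel)"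
  shows "(\<lambda>z. g1 z *v (g2 z :: real^'n)) \<in> borel_measurable M"
  using measurable_compose[OF assms H_Phi] by simp

lemma Phi_comp2:
  assumes "g1 \<in> measurable M H" "(g2 :: _ \<Rightarrow> real^'n) \<in> borel_measurable M"
  shows "(\<lambda>z. g1 z *v g2 z) \<in> borel_measurable M"
  by (rule Phi_comp) (rule measurable_Pair[OF assms])

end

locale core = hgrp U AU H for U AU :: "(real^'n^'n) set" and H +
  fixes \<nu> :: "(real^'n) measure" and \<alpha> :: real and kk :: "real \<Rightarrow> ennreal" and \<Psi> :: "real \<Rightarrow> real^'n^'n"
  assumes nu_sets: "sets \<nu> = sets borel" and nu0: "emeasure \<nu> {0} = 0"
    and nu_sf: "sigma_finite_measure \<nu>"
    and nu_inv: "\<And>g h. g \<in> U \<Longrightarrow> h \<in> borel_measurable borel \<Longrightarrow>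
        (\<integral>\<^sup>+y. h (g *v y) \<partial>\<nu>) = ennreal (opnorm g powr \<alpha>) * (\<integral>\<^sup>+y. h y \<partial>\<nu>)"
    and kk_meas[measurable]: "kk \<in> borel_measurable borel" and kk0: "kk 0 = 0"
    and kk_norm: "\<And>z::real^'n. z \<noteq> 0 \<Longrightarrow> (\<integral>\<^sup>+b. kk (norm z / opnorm b) \<partial>H) = 1"
    and Psi_meas[measurable]: "\<Psi> \<in> borel_measurable borel"
    and Psi_AU: "\<And>t. kk t \<noteq> 0 \<Longrightarrow> \<Psi> t \<in> AU"
begin

definition "D y = kk (norm y) * ennreal (opnorm (\<Psi> (norm y)) powr (- \<alpha>))"
definition "\<pi> y = \<Psi> (norm y) *v y"
definition "\<rho> = distr (density \<nu> D) borel \<pi>"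
abbreviation "W a \<equiv> ennreal (opnorm a powr (- \<alpha>))"

lemma D_meas[measurable]: "D \<in> borel_measurable borel"
  unfolding D_def by measurable

lemma pi_meas[measurable]: "\<pi> \<in> borel_measurable borel"
  unfolding \<pi>_def by (rule pi_meas_gen[OF Psi_meas])

lemma meas_nu: "measurable \<nu> = measurable borel" 
  by (rule ext, rule measurable_cong_sets[OF nu_sets refl])

lemma sets_Hnu: "sets (H \<Otimes>\<^sub>M \<nu>) = sets (H \<Otimes>\<^sub>M borel)"
  by (rule sets_pair_measure_cong[OF refl nu_sets])

lemma meas_Hnu: "measurable (H \<Otimes>\<^sub>M \<nu>) = measurable (H \<Otimes>\<^sub>M borel)"
  by (rule ext, rule measurable_cong_sets[OF sets_Hnu refl])

lemma pair_sf: "pair_sigma_finite H \<nu>"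
  using H_sf nu_sf by (simp add: pair_sigma_finite_def)

lemma AE_nz: "AE z in \<nu>. z \<noteq> 0"
proof -
  have "{0} \<in> null_sets \<nu>" using nu0 nu_sets by (auto intro: null_setsI)
  thus ?thesis by (rule AE_I') auto
qed

lemma W_meas[measurable]: "(\<lambda>a. W a) \<in> borel_measurable H"
  using H_norm by measurable

lemma core:
  assumes f[measurable]: "f \<in> borel_measurable (borel :: (real^'n) measure)"
  shows "(\<integral>\<^sup>+y. f y \<partial>\<nu>) = (\<integral>\<^sup>+a. (\<integral>\<^sup>+x. f (a *v x) * W a \<partial>\<rho>) \<partial>H)"
proof -
  \<comment> \<open>step 1\<close>
  have s1: "(\<integral>\<^sup>+x. f (a *v x) * W a \<partial>\<rho>) = (\<integral>\<^sup>+y. D y * (f (a *v \<pi> y) * W a) \<partial>\<nu>)" for a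
  proof -
    have m: "\<pi> \<in> measurable (density \<nu> D) borel"
      using measurable_cong_sets[of "density \<nu> D" borel borel borel] nu_sets pi_meas by simp
    have "(\<integral>\<^sup>+x. f (a *v x) * W a \<partial>\<rho>) = (\<integral>\<^sup>+y. f (a *v \<pi> y) * W a \<partial>density \<nu> D)"
      unfolding \<rho>_def by (rule nn_integral_distr[OF m]) simp
    also have "\<dots> = (\<integral>\<^sup>+y. D y * (f (a *v \<pi> y) * W a) \<partial>\<nu>)"
      by (rule nn_integral_density) (auto simp: meas_nu)
    finally show ?thesis .
  qed
  \<comment> \<open>step 2\<close>
  define G where "G a y = D y * (f (a *v \<pi> y) * W a)" for a y
  have Gm[measurable]: "(\<lambda>(a,y). G a y) \<in> borel_measurable (H \<Otimes>\<^sub>M \<nu>)"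
  proof -
    have "(\<lambda>z. fst z *v \<pi> (snd z)) \<in> borel_measurable (H \<Otimes>\<^sub>M borel)"
      by (rule Phi_comp2) measurable
    hence "(\<lambda>z. f (fst z *v \<pi> (snd z))) \<in> borel_measurable (H \<Otimes>\<^sub>M borel)"
      by measurable
    hence "(\<lambda>z. G (fst z) (snd z)) \<in> borel_measurable (H \<Otimes>\<^sub>M borel)"
      unfolding G_def using H_norm by measurable
    thus ?thesis by (simp add: meas_Hnu case_prod_beta')
  qed
  have s2: "(\<integral>\<^sup>+a. (\<integral>\<^sup>+x. f (a *v x) * W a \<partial>\<rho>) \<partial>H) = (\<integral>\<^sup>+y. (\<integral>\<^sup>+a. G a y \<partial>H) \<partial>\<nu>)"
    unfolding s1 G_def[symmetric]
    by (rule pair_sigma_finite.Fubini'[OF pair_sf Gm, symmetric])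
  \<comment> \<open>step 3\<close>
  have s3: "(\<integral>\<^sup>+a. G a y \<partial>H) = (\<integral>\<^sup>+b. kk (norm y) * (f (b *v y) * W b) \<partial>H)" for y
  proof (cases "kk (norm y) = 0")
    case True thus ?thesis by (simp add: G_def D_def)
  next
    case False
    define a0 where "a0 = \<Psi> (norm y)"
    have a0: "a0 \<in> AU" using Psi_AU[OF False] a0_def by simp
    define ai where "ai = matrix_inv a0"
    have ai: "ai \<in> AU" using A_inv a0 ai_def by simp
    have Gy[measurable]: "(\<lambda>a. G a y) \<in> borel_measurable H"
    proof -
      have "(\<lambda>a. a *v \<pi> y) \<in> borel_measurable H" by (rule Phi_comp2) auto
      thus ?thesis unfolding G_def using H_norm by measurable
    qed
    have "(\<integral>\<^sup>+a. G a y \<partial>H) = (\<integral>\<^sup>+a. G a y \<partial>distr H H (\<lambda>a. ai ** a))"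
      using H_inv[OF ai] by simp
    also have "\<dots> = (\<integral>\<^sup>+b. G (ai ** b) y \<partial>H)"
      by (rule nn_integral_distr[OF H_mult[OF ai]]) (simp add: H_inv[OF ai])
    also have "\<dots> = (\<integral>\<^sup>+b. kk (norm y) * (f (b *v y) * W b) \<partial>H)"
    proof (rule nn_integral_cong_AE)
      show "AE b in H. G (ai ** b) y = kk (norm y) * (f (b *v y) * W b)"
        using H_AE
      proof eventually_elim
        case (elim b)
        have bU: "b \<in> U" "ai \<in> U" "a0 \<in> U" using elim ai a0 A_U by auto
        have "ai ** b ** a0 = b ** ai ** a0" using A_comm[OF ai elim] by simp
        also have "\<dots> = b ** (matrix_inv a0 ** a0)" using ai_def by (simp add: matrix_mul_assoc)
        also have "\<dots> = b" using linv[OF bU(3)] by (simp add: matrix_mul_rid)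
        finally have e1: "(ai ** b) *v (a0 *v y) = b *v y" by (simp add: matrix_vector_mul_assoc)
        have pa: "opnorm a0 > 0" "opnorm b > 0" using pos bU by auto
        have e2: "opnorm (ai ** b) = opnorm b / opnorm a0"
          using opnorm_mult[OF bU(2) bU(1)] opnorm_inv[OF bU(3)] ai_def by simp
        have e3: "opnorm a0 powr - \<alpha> * (opnorm b / opnorm a0) powr - \<alpha> = opnorm b powr - \<alpha>"
          using pa by (simp add: powr_divide powr_minus field_simps)
        have "G (ai ** b) y = kk (norm y) * (ennreal (opnorm a0 powr - \<alpha>) * W (ai ** b)) * f (b *v y)"
          unfolding G_def D_def \<pi>_def a0_def[symmetric] e1 by (simp add: ac_simps)
        also have "ennreal (opnorm a0 powr - \<alpha>) * W (ai ** b) = W b"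
          unfolding e2 by (simp add: ennreal_mult[symmetric] e3)
        finally show ?case by (simp add: ac_simps)
      qed
    qed
    finally show ?thesis .
  qed
  \<comment> \<open>step 4\<close>
  define K where "K b y = kk (norm y) * (f (b *v y) * W b)" for b y
  have Km[measurable]: "(\<lambda>(b,y). K b y) \<in> borel_measurable (H \<Otimes>\<^sub>M \<nu>)"
  proof -
    have "(\<lambda>z. fst z *v snd z) \<in> borel_measurable (H \<Otimes>\<^sub>M borel)"
      by (rule Phi_comp2) measurable
    hence "(\<lambda>z. f (fst z *v snd z)) \<in> borel_measurable (H \<Otimes>\<^sub>M borel)"
      by measurable
    hence "(\<lambda>z. K (fst z) (snd z)) \<in> borel_measurable (H \<Otimes>\<^sub>M borel)"
      unfolding K_def using H_norm by measurable
    thus ?thesis by (simp add: meas_Hnu case_prod_beta')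
  qed
  have s4: "(\<integral>\<^sup>+y. (\<integral>\<^sup>+b. K b y \<partial>H) \<partial>\<nu>) = (\<integral>\<^sup>+b. (\<integral>\<^sup>+y. K b y \<partial>\<nu>) \<partial>H)"
    by (rule pair_sigma_finite.Fubini'[OF pair_sf Km])
  \<comment> \<open>step 5\<close>
  define L where "L b z = kk (norm z / opnorm b) * f z" for b :: "real^'n^'n" and z
  have s5: "AE b in H. (\<integral>\<^sup>+y. K b y \<partial>\<nu>) = (\<integral>\<^sup>+z. L b z \<partial>\<nu>)"
    using H_AE
  proof eventually_elim
    case (elim b)
    have bU: "b \<in> U" using elim A_U by auto
    have pb: "opnorm b > 0" using pos bU by auto
    define h where "h z = kk (norm z / opnorm b) * (f z * W b)" for z
    have hm[measurable]: "h \<in> borel_measurable borel" unfolding h_def by measurable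
    have "(\<integral>\<^sup>+y. K b y \<partial>\<nu>) = (\<integral>\<^sup>+y. h (b *v y) \<partial>\<nu>)"
      unfolding K_def h_def using normv[OF bU] pb by simp
    also have "\<dots> = ennreal (opnorm b powr \<alpha>) * (\<integral>\<^sup>+y. h y \<partial>\<nu>)"
      by (rule nu_inv[OF bU hm])
    also have "\<dots> = (\<integral>\<^sup>+y. ennreal (opnorm b powr \<alpha>) * h y \<partial>\<nu>)"
      by (rule nn_integral_cmult[symmetric]) (simp add: meas_nu)
    also have "\<dots> = (\<integral>\<^sup>+z. L b z \<partial>\<nu>)"
    proof (rule nn_integral_cong)
      fix z
      have "ennreal (opnorm b powr \<alpha>) * W b = 1"
        using pb by (simp add: ennreal_mult[symmetric] powr_minus)
      thus "ennreal (opnorm b powr \<alpha>) * h z = L b z"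
        unfolding h_def L_def by (metis (no_types, lifting) mult.assoc mult.commute mult.left_neutral)
    qed
    finally show ?case .
  qed
  \<comment> \<open>step 6\<close>
  have Lm[measurable]: "(\<lambda>(b,z). L b z) \<in> borel_measurable (H \<Otimes>\<^sub>M \<nu>)"
  proof -
    have "(\<lambda>p. L (fst p) (snd p)) \<in> borel_measurable (H \<Otimes>\<^sub>M borel)"
      unfolding L_def using H_norm by measurable
    thus ?thesis by (simp add: meas_Hnu case_prod_beta')
  qed
  have s6: "(\<integral>\<^sup>+b. (\<integral>\<^sup>+z. L b z \<partial>\<nu>) \<partial>H) = (\<integral>\<^sup>+z. (\<integral>\<^sup>+b. L b z \<partial>H) \<partial>\<nu>)"
    by (rule pair_sigma_finite.Fubini'[OF pair_sf Lm, symmetric])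
  have s7: "(\<integral>\<^sup>+z. (\<integral>\<^sup>+b. L b z \<partial>H) \<partial>\<nu>) = (\<integral>\<^sup>+z. f z \<partial>\<nu>)"
  proof (rule nn_integral_cong_AE)
    show "AE z in \<nu>. (\<integral>\<^sup>+b. L b z \<partial>H) = f z"
      using AE_nz
    proof eventually_elim
      case (elim z)
      have "(\<integral>\<^sup>+b. L b z \<partial>H) = (\<integral>\<^sup>+b. kk (norm z / opnorm b) \<partial>H) * f z"
        unfolding L_def by (rule nn_integral_multc) (use H_norm in measurable)
      thus ?case using kk_norm[of z] elim by simp
    qed
  qed
  have "(\<integral>\<^sup>+a. (\<integral>\<^sup>+x. f (a *v x) * W a \<partial>\<rho>) \<partial>H) = (\<integral>\<^sup>+y. (\<integral>\<^sup>+b. K b y \<partial>H) \<partial>\<nu>)"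
    unfolding s2 s3 K_def ..
  also have "\<dots> = (\<integral>\<^sup>+b. (\<integral>\<^sup>+z. L b z \<partial>\<nu>) \<partial>H)"
    unfolding s4 by (rule nn_integral_cong_AE[OF s5])
  finally show ?thesis unfolding s6 s7 by simp
qed


lemma sets_rho[simp]: "sets \<rho> = sets borel" unfolding \<rho>_def by simp

lemma meas_rho: "measurable \<rho> = measurable borel"
  by (rule ext, rule measurable_cong_sets[OF sets_rho refl])

lemma space_nu[simp]: "space \<nu> = UNIV"
  using sets_eq_imp_space_eq[OF nu_sets] by simp

lemma emeasure_rho: 
  assumes X: "X \<in> sets borel"
  shows "emeasure \<rho> X = (\<integral>\<^sup>+y. D y * indicator X (\<pi> y) \<partial>\<nu>)"
proof -
  have m: "\<pi> \<in> measurable (density \<nu> D) borel"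
    using measurable_cong_sets[of "density \<nu> D" borel borel borel] nu_sets pi_meas by simp
  have "emeasure \<rho> X = emeasure (density \<nu> D) (\<pi> -` X \<inter> space (density \<nu> D))"
    unfolding \<rho>_def by (rule emeasure_distr[OF m X])
  also have "\<dots> = (\<integral>\<^sup>+y. D y * indicator (\<pi> -` X \<inter> space \<nu>) y \<partial>\<nu>)"
  proof -
    have "\<pi> -` X \<in> sets \<nu>" using measurable_sets[OF pi_meas X] nu_sets by simp
    thus ?thesis by (subst emeasure_density) (auto simp: meas_nu ac_simps)
  qed
  also have "\<dots> = (\<integral>\<^sup>+y. D y * indicator X (\<pi> y) \<partial>\<nu>)"
    by (rule nn_integral_cong) (auto simp: indicator_def)
  finally show ?thesis .
qed

lemma rho_finite:
  assumes "(\<integral>\<^sup>+y. D y \<partial>\<nu>) < \<infinity>"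
  shows "finite_measure \<rho>"
proof (rule finite_measureI)
  have "emeasure \<rho> (space \<rho>) = emeasure \<rho> UNIV" unfolding \<rho>_def by simp
  also have "\<dots> = (\<integral>\<^sup>+y. D y \<partial>\<nu>)" by (subst emeasure_rho) auto
  finally show "emeasure \<rho> (space \<rho>) \<noteq> \<infinity>" using assms by simp
qed

lemma rho_supp:
  assumes S: "S \<in> sets borel" and supp: "\<And>y. kk (norm y) \<noteq> 0 \<Longrightarrow> \<pi> y \<in> S"
  shows "emeasure \<rho> (UNIV - S) = 0"
proof -
  have "emeasure \<rho> (UNIV - S) = (\<integral>\<^sup>+y. D y * indicator (UNIV - S) (\<pi> y) \<partial>\<nu>)"
    using S by (intro emeasure_rho) auto
  also have "\<dots> = (\<integral>\<^sup>+y. 0 \<partial>\<nu>)"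
    by (rule nn_integral_cong) (use supp in \<open>auto simp: D_def indicator_def\<close>)
  finally show ?thesis by simp
qed

lemma rho_inv:
  assumes comm: "\<And>c t. c \<in> CU U \<Longrightarrow> \<Psi> t ** c = c ** \<Psi> t"
    and c: "c \<in> CU U" and B: "B \<in> sets borel"
  shows "emeasure \<rho> ((\<lambda>x. c *v x) ` B) = emeasure \<rho> B"
proof -
  have cU: "c \<in> U" "opnorm c = 1" using c CU_iff by auto
  define ci where "ci = matrix_inv c"
  have ci: "ci \<in> CU U" using CU_inv c ci_def by simp
  have ciU: "ci \<in> U" "opnorm ci = 1" using ci CU_iff by auto
  have img: "(\<lambda>x. c *v x) ` B = (\<lambda>x. ci *v x) -` B"
    unfolding ci_def by (rule img_preimg[OF cU(1)])
  have cB: "(\<lambda>x. c *v x) ` B \<in> sets borel" unfolding img using measurable_sets[OF mv_fix_meas[of ci] B] by simp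
  define h where "h y = D y * indicator B (\<pi> y)" for y
  have hm: "h \<in> borel_measurable borel" unfolding h_def using B by measurable
  have "emeasure \<rho> ((\<lambda>x. c *v x) ` B) = (\<integral>\<^sup>+y. D y * indicator ((\<lambda>x. ci *v x) -` B) (\<pi> y) \<partial>\<nu>)"
    using emeasure_rho[OF cB] img by simp
  also have "\<dots> = (\<integral>\<^sup>+y. h (ci *v y) \<partial>\<nu>)"
  proof (rule nn_integral_cong)
    fix y
    have n: "norm (ci *v y) = norm y" using normv[OF ciU(1)] ciU(2) by simp
    have "ci *v \<pi> y = \<pi> (ci *v y)"
      unfolding \<pi>_def n by (simp add: matrix_vector_mul_assoc comm[OF ci])
    moreover have "D (ci *v y) = D y" unfolding D_def n ..
    ultimately show "D y * indicator ((\<lambda>x. ci *v x) -` B) (\<pi> y) = h (ci *v y)"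
      unfolding h_def by (simp add: indicator_def)
  qed
  also have "\<dots> = (\<integral>\<^sup>+y. h y \<partial>\<nu>)" using nu_inv[OF ciU(1) hm] ciU(2) by simp
  also have "\<dots> = emeasure \<rho> B" unfolding h_def using emeasure_rho[OF B] by simp
  finally show ?thesis .
qed


lemma bochner:
  assumes fin: "finite_measure \<rho>" and f: "integrable \<nu> f"
  shows "(\<integral>x. f x \<partial>\<nu>) = (\<integral>a. (\<integral>x. f (a *v x) * opnorm a powr (- \<alpha>) \<partial>\<rho>) \<partial>H)"
proof -
  have rsf: "sigma_finite_measure \<rho>" using fin unfolding finite_measure_def by simp
  have psf: "pair_sigma_finite H \<rho>" using H_sf rsf by (simp add: pair_sigma_finite_def)
  have sHr: "sets (H \<Otimes>\<^sub>M \<rho>) = sets (H \<Otimes>\<^sub>M borel)"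
    by (rule sets_pair_measure_cong[OF refl sets_rho])
  have mHr: "measurable (H \<Otimes>\<^sub>M \<rho>) = measurable (H \<Otimes>\<^sub>M borel)"
    by (rule ext, rule measurable_cong_sets[OF sHr refl])
  define Phi where "Phi z = fst z *v snd z" for z :: "(real^'n^'n) \<times> (real^'n)"
  define V where "V z = opnorm (fst z) powr (- \<alpha>)" for z :: "(real^'n^'n) \<times> (real^'n)"
  have Phim[measurable]: "Phi \<in> measurable (H \<Otimes>\<^sub>M \<rho>) borel"
    unfolding Phi_def mHr by (rule H_Phi)
  have Vm[measurable]: "V \<in> borel_measurable (H \<Otimes>\<^sub>M \<rho>)"
    unfolding V_def using H_norm by measurable
  define DD where "DD = density (H \<Otimes>\<^sub>M \<rho>) (\<lambda>z. ennreal (V z))"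
  define \<nu>' where "\<nu>' = distr DD borel Phi"
  have PhiD: "Phi \<in> measurable DD borel" unfolding DD_def using Phim
    by (simp add: measurable_cong_sets[of "density _ _" "H \<Otimes>\<^sub>M \<rho>" borel borel])
  have eq: "\<nu> = \<nu>'"
  proof (rule measure_eqI)
    show "sets \<nu> = sets \<nu>'" unfolding \<nu>'_def by (simp add: nu_sets)
    fix X assume "X \<in> sets \<nu>"
    hence X: "X \<in> sets borel" using nu_sets by simp
    have "emeasure \<nu> X = (\<integral>\<^sup>+y. indicator X y \<partial>\<nu>)"
      using X nu_sets by (simp add: nn_integral_indicator)
    also have "\<dots> = (\<integral>\<^sup>+a. (\<integral>\<^sup>+x. indicator X (a *v x) * W a \<partial>\<rho>) \<partial>H)"
      by (rule core) (use X in measurable)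
    also have "\<dots> = (\<integral>\<^sup>+z. indicator X (Phi z) * ennreal (V z) \<partial>(H \<Otimes>\<^sub>M \<rho>))"
    proof -
      have "(\<lambda>z. indicator X (Phi z) * ennreal (V z)) \<in> borel_measurable (H \<Otimes>\<^sub>M \<rho>)"
        using X by measurable
      from sigma_finite_measure.nn_integral_fst[OF rsf this] show ?thesis
        unfolding Phi_def V_def by simp
    qed
    also have "\<dots> = emeasure \<nu>' X"
    proof -
      have "Phi -` X \<inter> space DD \<in> sets (H \<Otimes>\<^sub>M \<rho>)"
        using measurable_sets[OF Phim X] unfolding DD_def by simp
      thus ?thesis unfolding \<nu>'_def DD_def
        by (subst emeasure_distr) (auto simp: emeasure_density PhiD[unfolded DD_def] X
            intro!: nn_integral_cong simp: indicator_def)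
    qed
    finally show "emeasure \<nu> X = emeasure \<nu>' X" .
  qed
  have fm[measurable]: "f \<in> borel_measurable borel" using f unfolding integrable_iff_bounded by (simp add: meas_nu)
  have int': "integrable \<nu>' f" using f eq by simp
  hence "integrable DD (\<lambda>z. f (Phi z))" unfolding \<nu>'_def by (subst (asm) integrable_distr_eq[OF PhiD fm])
  hence int2: "integrable (H \<Otimes>\<^sub>M \<rho>) (\<lambda>z. V z *\<^sub>R f (Phi z))"
    unfolding DD_def by (subst (asm) integrable_density) (auto simp: V_def)
  have "(\<integral>x. f x \<partial>\<nu>) = (\<integral>x. f x \<partial>\<nu>')" using eq by simp
  also have "\<dots> = (\<integral>z. f (Phi z) \<partial>DD)" unfolding \<nu>'_def by (rule integral_distr[OF PhiD fm])
  also have "\<dots> = (\<integral>z. V z *\<^sub>R f (Phi z) \<partial>(H \<Otimes>\<^sub>M \<rho>))"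
    unfolding DD_def by (rule integral_density) (use Vm[unfolded V_def] fm Phim in \<open>auto simp: V_def\<close>)
  also have "\<dots> = (\<integral>a. (\<integral>x. V (a, x) *\<^sub>R f (Phi (a, x)) \<partial>\<rho>) \<partial>H)"
    by (rule pair_sigma_finite.integral_fst'[OF psf int2, symmetric])
  also have "\<dots> = (\<integral>a. (\<integral>x. f (a *v x) * opnorm a powr (- \<alpha>) \<partial>\<rho>) \<partial>H)"
    unfolding V_def Phi_def by (simp add: mult.commute)
  finally show ?thesis .
qed

end

(* ---- e/PE ---- *)
context simgrp begin
lemma preimg_img: "a \<in> U \<Longrightarrow> (\<lambda>x. a *v x) -` B = (\<lambda>x. matrix_inv a *v x) ` B"
  by (auto simp: app_inv) (metis inv_app image_eqI)
end

context hgrp begin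

lemma rho_distr_inv:
  fixes \<rho> :: "(real^'n) measure"
  assumes sr: "sets \<rho> = sets borel"
    and inv: "\<And>c B. c \<in> CU U \<Longrightarrow> B \<in> sets borel \<Longrightarrow> emeasure \<rho> ((\<lambda>x. c *v x) ` B) = emeasure \<rho> B"
    and c: "c \<in> CU U"
  shows "distr \<rho> borel (\<lambda>x. c *v x) = \<rho>"
proof (rule measure_eqI)
  show "sets (distr \<rho> borel ((*v) c)) = sets \<rho>" using sr by simp
  fix X assume "X \<in> sets (distr \<rho> borel ((*v) c))"
  hence X: "X \<in> sets borel" by simp
  have cU: "c \<in> U" using c CU_iff by auto
  have sp: "space \<rho> = UNIV" using sets_eq_imp_space_eq[OF sr] by simp
  have m: "(\<lambda>x. c *v x) \<in> measurable \<rho> borel"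
    using measurable_cong_sets[OF sr refl] mv_fix_meas by blast
  have "emeasure (distr \<rho> borel ((*v) c)) X = emeasure \<rho> ((\<lambda>x. c *v x) -` X)"
    using emeasure_distr[OF m X] sp by simp
  also have "\<dots> = emeasure \<rho> ((\<lambda>x. matrix_inv c *v x) ` X)" using preimg_img[OF cU] by simp
  also have "\<dots> = emeasure \<rho> X" by (rule inv[OF CU_inv[OF c] X])
  finally show "emeasure (distr \<rho> borel ((*v) c)) X = emeasure \<rho> X" .
qed

lemma rhs_scale:
  fixes \<rho> :: "(real^'n) measure" and f :: "real^'n \<Rightarrow> real"
  assumes sr: "sets \<rho> = sets borel" and fin: "finite_measure \<rho>"
    and inv: "\<And>c B. c \<in> CU U \<Longrightarrow> B \<in> sets borel \<Longrightarrow> emeasure \<rho> ((\<lambda>x. c *v x) ` B) = emeasure \<rho> B"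
    and g: "g \<in> U" and fm[measurable]: "f \<in> borel_measurable borel"
  shows "(\<integral>a. (\<integral>x. f (g *v (a *v x)) * opnorm a powr (- \<alpha>) \<partial>\<rho>) \<partial>H)
       = opnorm g powr \<alpha> * (\<integral>a. (\<integral>x. f (a *v x) * opnorm a powr (- \<alpha>) \<partial>\<rho>) \<partial>H)"
proof -
  have rsf: "sigma_finite_measure \<rho>" using fin unfolding finite_measure_def by simp
  have sHr: "sets (H \<Otimes>\<^sub>M \<rho>) = sets (H \<Otimes>\<^sub>M borel)"
    by (rule sets_pair_measure_cong[OF refl sr])
  have mHr: "measurable (H \<Otimes>\<^sub>M \<rho>) = measurable (H \<Otimes>\<^sub>M borel)"
    by (rule ext, rule measurable_cong_sets[OF sHr refl])
  have mr: "measurable \<rho> = measurable borel"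
    by (rule ext, rule measurable_cong_sets[OF sr refl])
  obtain a0 c where a0: "a0 \<in> AU" "c \<in> CU U" "g = a0 ** c" "opnorm g = opnorm a0"
    using decomp[OF g] by metis
  have a0U: "a0 \<in> U" using a0 A_U by auto
  have cU: "c \<in> U" using a0 CU_iff by auto
  define L where "L b = (\<integral>x. f (b *v x) * opnorm b powr (- \<alpha>) \<partial>\<rho>)" for b
  have Phim: "(\<lambda>p. fst p *v snd p) \<in> borel_measurable (H \<Otimes>\<^sub>M \<rho>)" unfolding mHr by (rule H_Phi)
  have Lm[measurable]: "L \<in> borel_measurable H"
  proof -
    have "(\<lambda>(b,x). f (b *v x) * opnorm b powr (- \<alpha>)) \<in> borel_measurable (H \<Otimes>\<^sub>M \<rho>)"
      using Phim H_norm by (simp add: case_prod_beta') measurable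
    from sigma_finite_measure.borel_measurable_lebesgue_integral[OF rsf this] show ?thesis
      unfolding L_def by simp
  qed
  have lhsm: "(\<lambda>a. \<integral>x. f (g *v (a *v x)) * opnorm a powr (- \<alpha>) \<partial>\<rho>) \<in> borel_measurable H"
  proof -
    have "(\<lambda>(b,x). f (g *v (b *v x)) * opnorm b powr (- \<alpha>)) \<in> borel_measurable (H \<Otimes>\<^sub>M \<rho>)"
      using Phim H_norm by (simp add: case_prod_beta') measurable
    from sigma_finite_measure.borel_measurable_lebesgue_integral[OF rsf this] show ?thesis by simp
  qed
  have "(\<integral>a. (\<integral>x. f (g *v (a *v x)) * opnorm a powr (- \<alpha>) \<partial>\<rho>) \<partial>H)
      = (\<integral>a. opnorm g powr \<alpha> * L (a0 ** a) \<partial>H)"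
  proof (rule integral_cong_AE)
    show "(\<lambda>a. \<integral>x. f (g *v (a *v x)) * opnorm a powr (- \<alpha>) \<partial>\<rho>) \<in> borel_measurable H" by (rule lhsm)
    show "(\<lambda>a. opnorm g powr \<alpha> * L (a0 ** a)) \<in> borel_measurable H"
      using measurable_compose[OF H_mult[OF a0(1)] Lm] by measurable
    show "AE a in H. (\<integral>x. f (g *v (a *v x)) * opnorm a powr (- \<alpha>) \<partial>\<rho>) = opnorm g powr \<alpha> * L (a0 ** a)"
      using H_AE
    proof eventually_elim
      case (elim a)
      have aU: "a \<in> U" using elim A_U by auto
      define ca where "ca = matrix_inv a ** c ** a"
      have ca: "ca \<in> CU U" unfolding ca_def by (rule CU_conj[OF aU a0(2)])
      have e1: "g *v (a *v x) = (a0 ** a) *v (ca *v x)" for x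
      proof -
        have "(a0 ** a) *v (ca *v x) = (a0 ** (a ** ca)) *v x" by (simp add: matrix_vector_mul_assoc matrix_mul_assoc)
        also have "a ** ca = c ** a" unfolding ca_def using comm_conj[OF aU cU] by simp
        also have "(a0 ** (c ** a)) *v x = g *v (a *v x)" unfolding a0(3) by (simp add: matrix_vector_mul_assoc matrix_mul_assoc)
        finally show ?thesis by simp
      qed
      have pa: "opnorm a > 0" "opnorm a0 > 0" using pos aU a0U by auto
      have e2: "opnorm a powr (- \<alpha>) = opnorm g powr \<alpha> * opnorm (a0 ** a) powr (- \<alpha>)"
        using pa by (simp add: opnorm_mult[OF a0U aU] a0(4) powr_mult powr_minus field_simps)
      have "(\<integral>x. f (g *v (a *v x)) * opnorm a powr (- \<alpha>) \<partial>\<rho>)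
          = (\<integral>x. f ((a0 ** a) *v (ca *v x)) \<partial>\<rho>) * opnorm a powr (- \<alpha>)"
        unfolding e1 by simp
      also have "(\<integral>x. f ((a0 ** a) *v (ca *v x)) \<partial>\<rho>) = (\<integral>x. f ((a0 ** a) *v x) \<partial>distr \<rho> borel (\<lambda>x. ca *v x))"
      proof (rule integral_distr[symmetric])
        show "(*v) ca \<in> \<rho> \<rightarrow>\<^sub>M borel" unfolding mr by (rule mv_fix_meas)
        show "(\<lambda>x. f ((a0 ** a) *v x)) \<in> borel_measurable borel" by measurable
      qed
      also have "distr \<rho> borel ((*v) ca) = \<rho>"
      proof (rule rho_distr_inv[OF sr])
        fix c' and B :: "(real^'n) set" assume "c' \<in> CU U" "B \<in> sets borel"
        thus "emeasure \<rho> ((*v) c' ` B) = emeasure \<rho> B" by (rule inv)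
      qed (rule ca)
      also have "(\<integral>x. f ((a0 ** a) *v x) \<partial>\<rho>) * opnorm a powr (- \<alpha>) = opnorm g powr \<alpha> * L (a0 ** a)"
      proof -
        have "L (a0 ** a) = (\<integral>x. f ((a0 ** a) *v x) \<partial>\<rho>) * opnorm (a0 ** a) powr (- \<alpha>)"
          unfolding L_def by (rule integral_mult_left_zero)
        thus ?thesis unfolding e2 by (simp only: ac_simps)
      qed
      finally show ?case .
    qed
  qed
  also have "\<dots> = opnorm g powr \<alpha> * (\<integral>a. L (a0 ** a) \<partial>H)" by simp
  also have "(\<integral>a. L (a0 ** a) \<partial>H) = (\<integral>a. L a \<partial>distr H H (\<lambda>a. a0 ** a))"
    by (rule integral_distr[symmetric, OF H_mult[OF a0(1)]]) (simp add: H_inv[OF a0(1)])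
  also have "\<dots> = (\<integral>a. L a \<partial>H)" using H_inv[OF a0(1)] by simp
  finally show ?thesis unfolding L_def .
qed


lemma conv:
  fixes \<nu> \<rho> :: "(real^'n) measure"
  assumes nu_sets: "sets \<nu> = sets borel"
    and nufin: "\<And>\<delta>. \<delta> > 0 \<Longrightarrow> emeasure \<nu> {y. \<delta> \<le> norm y} < \<infinity>"
    and sr: "sets \<rho> = sets borel" and fin: "finite_measure \<rho>"
    and inv: "\<And>c B. c \<in> CU U \<Longrightarrow> B \<in> sets borel \<Longrightarrow> emeasure \<rho> ((\<lambda>x. c *v x) ` B) = emeasure \<rho> B"
    and formula: "\<forall>f::real^'n \<Rightarrow> real. integrable \<nu> f \<longrightarrow>
        (\<integral>x. f x \<partial>\<nu>) = (\<integral>a. (\<integral>x. f (a *v x) * opnorm a powr (- \<alpha>) \<partial>\<rho>) \<partial>H)"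
    and g: "g \<in> U" and B: "B \<in> sets borel" and B0: "0 \<notin> B"
  shows "emeasure \<nu> ((\<lambda>x. g *v x) ` B) = ennreal (opnorm g powr (- \<alpha>)) * emeasure \<nu> B"
proof -
  define R where "R f = (\<integral>a. (\<integral>x. f (a *v x) * opnorm a powr (- \<alpha>) \<partial>\<rho>) \<partial>H)" for f :: "real^'n \<Rightarrow> real"
  have sp: "space \<nu> = UNIV" using sets_eq_imp_space_eq[OF nu_sets] by simp
  have pg: "opnorm g > 0" using pos g by auto
  define Bk where "Bk k = B \<inter> {y. 1 / real (Suc k) \<le> norm y}" for k
  have Bkm: "Bk k \<in> sets borel" for k unfolding Bk_def using B by measurable
  have gimg: "(\<lambda>x. g *v x) ` X = (\<lambda>x. matrix_inv g *v x) -` X" for X by (rule img_preimg[OF g])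
  have gBkm: "(\<lambda>x. g *v x) ` Bk k \<in> sets borel" for k
    unfolding gimg using measurable_sets[OF mv_fix_meas[of "matrix_inv g"] Bkm[of k]] by simp
  have gBm: "(\<lambda>x. g *v x) ` B \<in> sets borel"
    unfolding gimg using measurable_sets[OF mv_fix_meas[of "matrix_inv g"] B] by simp
  have fin1: "emeasure \<nu> (Bk k) < \<infinity>" for k
  proof -
    have "emeasure \<nu> (Bk k) \<le> emeasure \<nu> {y. 1 / real (Suc k) \<le> norm y}"
      by (rule emeasure_mono) (auto simp: Bk_def nu_sets)
    also have "\<dots> < \<infinity>" by (rule nufin) simp
    finally show ?thesis .
  qed
  have fin2: "emeasure \<nu> ((\<lambda>x. g *v x) ` Bk k) < \<infinity>" for k
  proof -
    have "(\<lambda>x. g *v x) ` Bk k \<subseteq> {y. opnorm g / real (Suc k) \<le> norm y}"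
    proof
      fix y assume "y \<in> (\<lambda>x. g *v x) ` Bk k"
      then obtain x where x: "x \<in> Bk k" "y = g *v x" by blast
      have "opnorm g / real (Suc k) = opnorm g * (1 / real (Suc k))" by simp
      also have "\<dots> \<le> opnorm g * norm x" using x(1) pg unfolding Bk_def by (intro mult_left_mono) auto
      finally show "y \<in> {y. opnorm g / real (Suc k) \<le> norm y}" using x normv[OF g] by simp
    qed
    hence "emeasure \<nu> ((\<lambda>x. g *v x) ` Bk k) \<le> emeasure \<nu> {y. opnorm g / real (Suc k) \<le> norm y}"
      by (intro emeasure_mono) (auto simp: nu_sets)
    also have "\<dots> < \<infinity>" by (rule nufin) (use pg in simp)
    finally show ?thesis .
  qed
  have key: "emeasure \<nu> ((\<lambda>x. g *v x) ` Bk k) = ennreal (opnorm g powr (- \<alpha>)) * emeasure \<nu> (Bk k)" for k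
  proof -
    let ?A = "(\<lambda>x. g *v x) ` Bk k"
    have i1: "integrable \<nu> (indicator (Bk k) :: _ \<Rightarrow> real)"
      using fin1[of k] Bkm[of k] by (simp add: integrable_indicator_iff sp nu_sets)
    have i2: "integrable \<nu> (indicator ?A :: _ \<Rightarrow> real)"
      using fin2[of k] gBkm[of k] by (simp add: integrable_indicator_iff sp nu_sets)
    have ind: "indicator (Bk k) x = (indicator ?A (g *v x) :: real)" for x
    proof -
      have "x \<in> Bk k \<longleftrightarrow> g *v x \<in> ?A"
        by (auto dest: arg_cong[where f="\<lambda>y. matrix_inv g *v y"] simp: inv_app[OF g])
      thus ?thesis by (simp add: indicator_def)
    qed
    have "measure \<nu> (Bk k) = (\<integral>x. indicator (Bk k) x \<partial>\<nu>)"
      by (simp add: Bochner_Integration.integral_indicator sp)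
    also have "\<dots> = R (indicator (Bk k))" unfolding R_def using formula i1 by blast
    also have "\<dots> = R (\<lambda>x. indicator ?A (g *v x))" unfolding ind ..
    also have "\<dots> = opnorm g powr \<alpha> * R (indicator ?A)"
      unfolding R_def
    proof (rule rhs_scale[OF sr fin _ g])
      fix c and X :: "(real^'n) set" assume "c \<in> CU U" "X \<in> sets borel"
      thus "emeasure \<rho> ((\<lambda>x. c *v x) ` X) = emeasure \<rho> X" by (rule inv)
    next
      show "indicator ?A \<in> borel_measurable borel" using gBkm[of k] by simp
    qed
    also have "R (indicator ?A) = (\<integral>x. indicator ?A x \<partial>\<nu>)"
    proof -
      have "(\<integral>x. indicator ?A x \<partial>\<nu>) = R (indicator ?A)" unfolding R_def using formula i2 by blast
      thus ?thesis by (rule sym)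
    qed
    also have "\<dots> = measure \<nu> ?A" by (simp add: Bochner_Integration.integral_indicator sp)
    finally have m: "measure \<nu> ?A = opnorm g powr (- \<alpha>) * measure \<nu> (Bk k)"
      using pg by (simp add: powr_minus field_simps)
    have "emeasure \<nu> ?A = ennreal (measure \<nu> ?A)" using fin2[of k] by (simp add: emeasure_eq_ennreal_measure)
    also have "\<dots> = ennreal (opnorm g powr (- \<alpha>)) * ennreal (measure \<nu> (Bk k))"
      unfolding m by (simp add: ennreal_mult)
    also have "ennreal (measure \<nu> (Bk k)) = emeasure \<nu> (Bk k)"
      using fin1[of k] by (simp add: emeasure_eq_ennreal_measure)
    finally show ?thesis .
  qed
  have incB: "incseq Bk"
  proof (rule incseq_SucI)
    fix k
    have "1 / real (Suc (Suc k)) \<le> 1 / real (Suc k)" by (simp add: frac_le)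
    thus "Bk k \<subseteq> Bk (Suc k)" unfolding Bk_def by auto
  qed
  have incgB: "incseq (\<lambda>k. (\<lambda>x. g *v x) ` Bk k)"
    using incB by (auto simp: incseq_def image_mono)
  have UB: "(\<Union>k. Bk k) = B"
  proof
    show "(\<Union>k. Bk k) \<subseteq> B" unfolding Bk_def by auto
    show "B \<subseteq> (\<Union>k. Bk k)"
    proof
      fix y assume y: "y \<in> B"
      hence "norm y > 0" using B0 by (cases "y = 0") auto
      then obtain k where "inverse (real (Suc k)) < norm y" using reals_Archimedean by blast
      thus "y \<in> (\<Union>k. Bk k)" using y unfolding Bk_def by (auto simp: field_simps intro!: exI[of _ k])
    qed
  qed
  have UgB: "(\<Union>k. (\<lambda>x. g *v x) ` Bk k) = (\<lambda>x. g *v x) ` B" using UB by blast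
  have "emeasure \<nu> ((\<lambda>x. g *v x) ` B) = (SUP k. emeasure \<nu> ((\<lambda>x. g *v x) ` Bk k))"
    unfolding UgB[symmetric] by (rule SUP_emeasure_incseq[symmetric]) (use gBkm nu_sets incgB in auto)
  also have "\<dots> = (SUP k. ennreal (opnorm g powr (- \<alpha>)) * emeasure \<nu> (Bk k))" unfolding key ..
  also have "\<dots> = ennreal (opnorm g powr (- \<alpha>)) * (SUP k. emeasure \<nu> (Bk k))"
    by (rule SUP_mult_left_ennreal[symmetric])
  also have "(SUP k. emeasure \<nu> (Bk k)) = emeasure \<nu> B"
    unfolding UB[symmetric] by (rule SUP_emeasure_incseq) (use Bkm nu_sets incB in auto)
  finally show ?thesis .
qed

end

context grp begin

lemma nu_inv_from:
  fixes \<nu> :: "(real^'n) measure"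
  assumes nu_sets: "sets \<nu> = sets borel" and nu0: "emeasure \<nu> {0} = 0"
    and hi: "\<forall>g\<in>U. \<forall>B\<in>sets borel. 0 \<notin> B \<longrightarrow>
             emeasure \<nu> ((\<lambda>x. g *v x) ` B) = ennreal (opnorm g powr (- \<alpha>)) * emeasure \<nu> B"
    and g: "g \<in> U" and h: "h \<in> borel_measurable borel"
  shows "(\<integral>\<^sup>+y. h (g *v y) \<partial>\<nu>) = ennreal (opnorm g powr \<alpha>) * (\<integral>\<^sup>+y. h y \<partial>\<nu>)"
proof -
  have sp: "space \<nu> = UNIV" using sets_eq_imp_space_eq[OF nu_sets] by simp
  have mn: "measurable \<nu> = measurable borel" by (rule ext, rule measurable_cong_sets[OF nu_sets refl])
  have pg: "opnorm g > 0" using pos g by auto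
  have gi: "matrix_inv g \<in> U" using inv_in g by auto
  have null0: "{0} \<in> null_sets \<nu>" using nu0 nu_sets by (auto intro: null_setsI)
  have m: "(\<lambda>x. g *v x) \<in> measurable \<nu> borel" unfolding mn by (rule mv_fix_meas)
  have eq: "distr \<nu> borel (\<lambda>x. g *v x) = density \<nu> (\<lambda>_. ennreal (opnorm g powr \<alpha>))"
  proof (rule measure_eqI)
    show "sets (distr \<nu> borel ((*v) g)) = sets (density \<nu> (\<lambda>_. ennreal (opnorm g powr \<alpha>)))"
      using nu_sets by simp
    fix X assume "X \<in> sets (distr \<nu> borel ((*v) g))"
    hence X: "X \<in> sets borel" by simp
    have X0: "X - {0} \<in> sets borel" using X by auto
    have pre: "(\<lambda>x. g *v x) -` Y = (\<lambda>x. matrix_inv g *v x) ` Y" for Y by (rule preimg_img[OF g])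
    have preX: "(\<lambda>x. matrix_inv g *v x) ` X \<in> sets \<nu>"
      using measurable_sets[OF m X] unfolding pre sp by simp
    have zero: "matrix_inv g *v x = 0 \<longleftrightarrow> x = 0" for x
      by (metis app_inv g matrix_vector_mult_0_right)
    have "emeasure (distr \<nu> borel ((*v) g)) X = emeasure \<nu> ((\<lambda>x. g *v x) -` X)"
      using emeasure_distr[OF m X] sp by simp
    also have "\<dots> = emeasure \<nu> ((\<lambda>x. matrix_inv g *v x) ` X - {0})"
      unfolding pre by (rule emeasure_Diff_null_set[OF null0 preX, symmetric])
    also have "(\<lambda>x. matrix_inv g *v x) ` X - {0} = (\<lambda>x. matrix_inv g *v x) ` (X - {0})"
      using zero by auto
    also have "emeasure \<nu> \<dots> = ennreal (opnorm (matrix_inv g) powr (- \<alpha>)) * emeasure \<nu> (X - {0})"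
      using hi gi X0 by blast
    also have "emeasure \<nu> (X - {0}) = emeasure \<nu> X"
      by (rule emeasure_Diff_null_set[OF null0]) (use X nu_sets in simp)
    also have "opnorm (matrix_inv g) powr (- \<alpha>) = opnorm g powr \<alpha>"
      using pg by (simp add: opnorm_inv[OF g] powr_minus powr_divide)
    finally show "emeasure (distr \<nu> borel ((*v) g)) X = emeasure (density \<nu> (\<lambda>_. ennreal (opnorm g powr \<alpha>))) X"
      using X nu_sets by (simp add: emeasure_density_const)
  qed
  have "(\<integral>\<^sup>+y. h (g *v y) \<partial>\<nu>) = (\<integral>\<^sup>+y. h y \<partial>distr \<nu> borel (\<lambda>x. g *v x))"
    by (rule nn_integral_distr[symmetric, OF m]) (use h in simp)
  also have "\<dots> = (\<integral>\<^sup>+y. ennreal (opnorm g powr \<alpha>) * h y \<partial>\<nu>)"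
    unfolding eq by (rule nn_integral_density) (auto simp: mn h)
  also have "\<dots> = ennreal (opnorm g powr \<alpha>) * (\<integral>\<^sup>+y. h y \<partial>\<nu>)"
    by (rule nn_integral_cmult) (simp add: mn h)
  finally show ?thesis .
qed

end

(* ---- f/PF ---- *)
lemma levy_sets: "levy_measure \<nu> \<Longrightarrow> sets \<nu> = sets borel"
  unfolding levy_measure_def by simp

lemma levy0: "levy_measure \<nu> \<Longrightarrow> emeasure \<nu> {0} = 0"
  unfolding levy_measure_def by simp

lemma levy_fin:
  fixes \<nu> :: "(real^'n) measure"
  assumes L: "levy_measure \<nu>" and d: "\<delta> > 0"
  shows "emeasure \<nu> {y. \<delta> \<le> norm y} < \<infinity>"
proof -
  have ns: "sets \<nu> = sets borel" using L levy_sets by blast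
  have sp: "space \<nu> = UNIV" using sets_eq_imp_space_eq[OF ns] by simp
  have mn: "measurable \<nu> = measurable borel" by (rule ext, rule measurable_cong_sets[OF ns refl])
  define m where "m = min 1 (\<delta>^2)"
  have m0: "m > 0" using d unfolding m_def by simp
  have Ym: "{y::real^'n. \<delta> \<le> norm y} \<in> sets \<nu>" unfolding ns by measurable
  have "ennreal m * emeasure \<nu> {y. \<delta> \<le> norm y} = (\<integral>\<^sup>+y. ennreal m * indicator {y. \<delta> \<le> norm y} y \<partial>\<nu>)"
    using Ym by (simp add: nn_integral_cmult_indicator)
  also have "\<dots> \<le> (\<integral>\<^sup>+y. ennreal (min 1 (norm y ^ 2)) \<partial>\<nu>)"
  proof (rule nn_integral_mono)
    fix y
    show "ennreal m * indicator {y. \<delta> \<le> norm y} y \<le> ennreal (min 1 (norm y ^ 2))"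
    proof (cases "\<delta> \<le> norm y")
      case True
      hence "\<delta>^2 \<le> norm y ^ 2" using d by (intro power_mono) auto
      hence "m \<le> min 1 (norm y ^ 2)" unfolding m_def by auto
      thus ?thesis using True by simp
    qed simp
  qed
  also have "\<dots> < \<infinity>" using L unfolding levy_measure_def by simp
  finally have "ennreal m * emeasure \<nu> {y. \<delta> \<le> norm y} < \<infinity>" .
  thus ?thesis using m0 by (auto simp: ennreal_mult_less_top)
qed

lemma levy_sf:
  fixes \<nu> :: "(real^'n) measure"
  assumes L: "levy_measure \<nu>"
  shows "sigma_finite_measure \<nu>"
proof -
  have ns: "sets \<nu> = sets borel" using L levy_sets by blast
  have sp: "space \<nu> = UNIV" using sets_eq_imp_space_eq[OF ns] by simp
  define A where "A = insert {0} (range (\<lambda>k::nat. {y::real^'n. 1 / real (Suc k) \<le> norm y}))"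
  show ?thesis
  proof (unfold_locales, intro exI[of _ A] conjI ballI)
    show "countable A" unfolding A_def by simp
    show "A \<subseteq> sets \<nu>" unfolding A_def ns by auto
    show "\<Union> A = space \<nu>"
    proof -
      have "y \<in> \<Union> A" for y
      proof (cases "y = 0")
        case False
        hence "norm y > 0" by simp
        then obtain k where "inverse (real (Suc k)) < norm y" using reals_Archimedean by blast
        thus ?thesis unfolding A_def by (auto simp: field_simps intro!: exI[of _ k])
      qed (auto simp: A_def)
      thus ?thesis using sp by auto
    qed
    fix a assume "a \<in> A"
    then consider "a = {0}" | k where "a = {y. 1 / real (Suc k) \<le> norm y}" unfolding A_def by blast
    thus "emeasure \<nu> a \<noteq> \<infinity>"
    proof cases
      case 1 thus ?thesis using levy0[OF L] by simp
    next
      case (2 k)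
      have "emeasure \<nu> a < \<infinity>" unfolding 2 by (rule levy_fin[OF L]) simp
      thus ?thesis by simp
    qed
  qed
qed

context hgrp begin

lemma assemble:
  fixes \<nu> :: "(real^'n) measure" and \<alpha> :: real and kk :: "real \<Rightarrow> ennreal"
    and \<Psi> :: "real \<Rightarrow> real^'n^'n" and S :: "(real^'n) set"
  assumes L: "levy_measure \<nu>"
    and kk_meas: "kk \<in> borel_measurable borel" and kk0: "kk 0 = 0"
    and kk_norm: "\<And>z::real^'n. z \<noteq> 0 \<Longrightarrow> (\<integral>\<^sup>+b. kk (norm z / opnorm b) \<partial>H) = 1"
    and Psi_meas: "\<Psi> \<in> borel_measurable borel"
    and Psi_AU: "\<And>t. kk t \<noteq> 0 \<Longrightarrow> \<Psi> t \<in> AU"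
    and comm: "\<And>c t. c \<in> CU U \<Longrightarrow> \<Psi> t ** c = c ** \<Psi> t"
    and S: "S \<in> sets borel"
    and supp: "\<And>y. kk (norm y) \<noteq> 0 \<Longrightarrow> \<Psi> (norm y) *v y \<in> S"
    and fin: "(\<integral>\<^sup>+y. kk (norm y) * ennreal (opnorm (\<Psi> (norm y)) powr (- \<alpha>)) \<partial>\<nu>) < \<infinity>"
  shows "(\<forall>g\<in>U. \<forall>B\<in>sets borel. 0 \<notin> B \<longrightarrow>
             emeasure \<nu> ((\<lambda>x. g *v x) ` B) = ennreal (opnorm g powr (- \<alpha>)) * emeasure \<nu> B)
     \<longleftrightarrow>
     (\<exists>\<rho>. sets \<rho> = sets borel \<and> finite_measure \<rho> \<and> emeasure \<rho> (UNIV - S) = 0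
        \<and> (\<forall>c\<in>CU U. \<forall>B\<in>sets borel. emeasure \<rho> ((\<lambda>x. c *v x) ` B) = emeasure \<rho> B)
        \<and> (\<forall>f::real^'n \<Rightarrow> real. integrable \<nu> f \<longrightarrow>
             (\<integral>x. f x \<partial>\<nu>) = (\<integral>a. (\<integral>x. f (a *v x) * opnorm a powr (- \<alpha>) \<partial>\<rho>) \<partial>H)))"
    (is "?I \<longleftrightarrow> ?II")
proof
  assume hi: ?I
  have C: "core U AU H \<nu> \<alpha> kk \<Psi>"
  proof (rule core.intro[OF hgrp_axioms], rule core_axioms.intro)
    show "sets \<nu> = sets borel" using levy_sets[OF L] .
    show "emeasure \<nu> {0} = 0" using levy0[OF L] .
    show "sigma_finite_measure \<nu>" using levy_sf[OF L] .
    show "\<And>g h. g \<in> U \<Longrightarrow> h \<in> borel_measurable borel \<Longrightarrow>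
        (\<integral>\<^sup>+y. h (g *v y) \<partial>\<nu>) = ennreal (opnorm g powr \<alpha>) * (\<integral>\<^sup>+y. h y \<partial>\<nu>)"
      by (rule nu_inv_from[OF levy_sets[OF L] levy0[OF L] hi])
  qed (use kk_meas kk0 kk_norm Psi_meas Psi_AU in auto)
  interpret core U AU H \<nu> \<alpha> kk \<Psi> by (rule C)
  have rf: "finite_measure \<rho>" by (rule rho_finite) (use fin in \<open>simp add: D_def\<close>)
  show ?II
  proof (intro exI[of _ \<rho>] conjI ballI allI impI)
    show "sets \<rho> = sets borel" by simp
    show "finite_measure \<rho>" by (rule rf)
    show "emeasure \<rho> (UNIV - S) = 0" by (rule rho_supp[OF S]) (use supp in \<open>simp add: \<pi>_def\<close>)
    fix c B assume "c \<in> CU U" "B \<in> sets (borel :: (real^'n) measure)"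
    thus "emeasure \<rho> ((\<lambda>x. c *v x) ` B) = emeasure \<rho> B" by (intro rho_inv comm)
  next
    fix f :: "real^'n \<Rightarrow> real" assume "integrable \<nu> f"
    thus "(\<integral>x. f x \<partial>\<nu>) = (\<integral>a. (\<integral>x. f (a *v x) * opnorm a powr (- \<alpha>) \<partial>\<rho>) \<partial>H)"
      by (rule bochner[OF rf])
  qed
next
  assume ?II
  then obtain \<rho> where r: "sets \<rho> = sets borel" "finite_measure \<rho>"
    "\<forall>c\<in>CU U. \<forall>B\<in>sets borel. emeasure \<rho> ((\<lambda>x. c *v x) ` B) = emeasure \<rho> B"
    "\<forall>f::real^'n \<Rightarrow> real. integrable \<nu> f \<longrightarrow>
             (\<integral>x. f x \<partial>\<nu>) = (\<integral>a. (\<integral>x. f (a *v x) * opnorm a powr (- \<alpha>) \<partial>\<rho>) \<partial>H)"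
    by blast
  show ?I
  proof (intro ballI impI)
    fix g B assume "g \<in> U" "B \<in> sets (borel :: (real^'n) measure)" "0 \<notin> B"
    thus "emeasure \<nu> ((\<lambda>x. g *v x) ` B) = ennreal (opnorm g powr (- \<alpha>)) * emeasure \<nu> B"
      using conv[OF levy_sets[OF L] levy_fin[OF L] r(1,2) _ r(4)] r(3) by blast
  qed
qed

end

(* ---- g/PG ---- *)
lemma shell_int:
  fixes r nz :: real and n :: int
  assumes r: "0 < r" "r < 1" and nz: "nz > 0"
  shows "(r \<le> nz / r powr n \<and> nz / r powr n < 1) \<longleftrightarrow> n = \<lceil>ln nz / ln r\<rceil> - 1"
proof -
  define L where "L = ln r"
  have L: "L < 0" unfolding L_def using r by simp
  define x where "x = ln nz / L"
  have rp: "r powr n > 0" using r by simp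
  have "r \<le> nz / r powr n \<longleftrightarrow> r * r powr n \<le> nz" using rp by (simp add: field_simps)
  also have "\<dots> \<longleftrightarrow> ln (r * r powr n) \<le> ln nz" using rp r nz by simp
  also have "ln (r * r powr n) = (n + 1) * L" using r rp unfolding L_def
    by (simp add: ln_mult ln_powr algebra_simps)
  also have "(n + 1) * L \<le> ln nz \<longleftrightarrow> x \<le> n + 1" unfolding x_def using L by (simp add: field_simps)
  finally have e1: "r \<le> nz / r powr n \<longleftrightarrow> x \<le> n + 1" .
  have "nz / r powr n < 1 \<longleftrightarrow> nz < r powr n" using rp by (simp add: field_simps)
  also have "\<dots> \<longleftrightarrow> ln nz < ln (r powr n)" by (rule ln_less_cancel_iff[symmetric]) (use rp nz in auto)
  also have "ln (r powr n) = n * L" using r unfolding L_def by (simp add: ln_powr)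
  also have "ln nz < n * L \<longleftrightarrow> n < x" unfolding x_def using L by (simp add: field_simps)
  finally have e2: "nz / r powr n < 1 \<longleftrightarrow> n < x" .
  have "(x \<le> n + 1 \<and> n < x) \<longleftrightarrow> n = \<lceil>x\<rceil> - 1"
    by (smt (verit, best) ceiling_correct ceiling_less_iff le_ceiling_iff of_int_1 of_int_add of_int_diff)
  thus ?thesis using e1 e2 unfolding x_def L_def by simp
qed

context grp begin

lemma disc_main:
  fixes \<nu> :: "(real^'n) measure" and \<alpha> r :: real and A :: "real^'n^'n"
  assumes L: "levy_measure \<nu>" and r: "0 < r" "r < 1"
    and GU: "GU U = range (\<lambda>n::int. r powr of_int n)" and AUr: "AU = range (matpowi A)"
  shows "(\<forall>g\<in>U. \<forall>B\<in>sets borel. 0 \<notin> B \<longrightarrow>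
             emeasure \<nu> ((\<lambda>x. g *v x) ` B) = ennreal (opnorm g powr (- \<alpha>)) * emeasure \<nu> B)
     \<longleftrightarrow>
     (\<exists>\<rho>. sets \<rho> = sets borel \<and> finite_measure \<rho> \<and> emeasure \<rho> (UNIV - {x. r \<le> norm x \<and> norm x < 1}) = 0
        \<and> (\<forall>c\<in>CU U. \<forall>B\<in>sets borel. emeasure \<rho> ((\<lambda>x. c *v x) ` B) = emeasure \<rho> B)
        \<and> (\<forall>f::real^'n \<Rightarrow> real. integrable \<nu> f \<longrightarrow>
             (\<integral>x. f x \<partial>\<nu>) = (\<integral>a. (\<integral>x. f (a *v x) * opnorm a powr (- \<alpha>) \<partial>\<rho>) \<partial>count_space AU)))"
proof -
  have cAU: "countable AU" unfolding AUr by simp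
  have Hg: "hgrp U AU (count_space AU)"
  proof (rule hgrp.intro[OF grp_axioms], rule hgrp_axioms.intro)
    show "sigma_finite_measure (count_space AU)" using cAU by (rule sigma_finite_measure_count_space_countable)
    show "AE a in count_space AU. a \<in> AU" by (simp add: AE_count_space)
    fix a0 assume a0: "a0 \<in> AU"
    have bij: "bij_betw (\<lambda>a. a0 ** a) AU AU"
    proof (rule bij_betwI[where g="\<lambda>a. matrix_inv a0 ** a"])
      show "(\<lambda>a. a0 ** a) \<in> AU \<rightarrow> AU" using A_mult a0 by auto
      show "(\<lambda>a. matrix_inv a0 ** a) \<in> AU \<rightarrow> AU" using A_mult A_inv a0 by auto
      fix x
      show "matrix_inv a0 ** (a0 ** x) = x"
        by (metis matrix_mul_assoc matrix_mul_lid linv A_U a0)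
      show "a0 ** (matrix_inv a0 ** x) = x"
        by (metis matrix_mul_assoc matrix_mul_lid rinv A_U a0)
    qed
    show "distr (count_space AU) (count_space AU) (\<lambda>a. a0 ** a) = count_space AU"
      by (rule distr_bij_count_space[OF bij])
    show "(\<lambda>a. a0 ** a) \<in> count_space AU \<rightarrow>\<^sub>M count_space AU"
      using A_mult a0 by (auto simp: measurable_count_space_eq1)
  next
    show "(\<lambda>p. fst p *v snd p) \<in> borel_measurable (count_space AU \<Otimes>\<^sub>M (borel :: (real^'n) measure))"
      by (rule measurable_pair_measure_countable1[OF cAU]) simp
    show "opnorm \<in> borel_measurable (count_space AU)" by simp
  qed
  interpret hgrp U AU "count_space AU" by (rule Hg)
  define kk :: "real \<Rightarrow> ennreal" where "kk t = indicator {r..<1} t" for t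
  have ns: "sets \<nu> = sets borel" by (rule levy_sets[OF L])
  show ?thesis
  proof (rule assemble[OF L, where kk=kk and \<Psi>="\<lambda>_. mat 1"])
    show "kk \<in> borel_measurable borel" unfolding kk_def by measurable
    show "kk 0 = 0" unfolding kk_def using r by simp
    show "(\<lambda>_. mat 1) \<in> borel_measurable borel" by simp
    show "\<And>t. kk t \<noteq> 0 \<Longrightarrow> mat 1 \<in> AU" using A_one by simp
    show "\<And>c t. c \<in> CU U \<Longrightarrow> mat 1 ** c = c ** mat 1" by (simp add: matrix_mul_lid matrix_mul_rid)
    show "{x::real^'n. r \<le> norm x \<and> norm x < 1} \<in> sets borel" by measurable
    show "\<And>y. kk (norm y) \<noteq> 0 \<Longrightarrow> mat 1 *v y \<in> {x. r \<le> norm x \<and> norm x < 1}"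
      unfolding kk_def by (auto simp: indicator_def)
    show "(\<integral>\<^sup>+y. kk (norm y) * ennreal (opnorm (mat 1 :: real^'n^'n) powr - \<alpha>) \<partial>\<nu>) < \<infinity>"
    proof -
      have "(\<integral>\<^sup>+y. kk (norm y) * ennreal (opnorm (mat 1 :: real^'n^'n) powr - \<alpha>) \<partial>\<nu>)
          \<le> (\<integral>\<^sup>+y. indicator {y. r \<le> norm y} y \<partial>\<nu>)"
        by (rule nn_integral_mono) (auto simp: kk_def opnorm_id indicator_def)
      also have "\<dots> = emeasure \<nu> {y. r \<le> norm y}"
        by (rule nn_integral_indicator) (simp add: ns)
      also have "\<dots> < \<infinity>" by (rule levy_fin[OF L r(1)])
      finally show ?thesis .
    qed
    fix z :: "real^'n" assume z: "z \<noteq> 0"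
    define nz where "nz = norm z"
    have nz: "nz > 0" using z nz_def by simp
    define n0 where "n0 = \<lceil>ln nz / ln r\<rceil> - 1"
    have "r powr of_int n0 \<in> GU U" unfolding GU by simp
    then obtain b0 where b0: "b0 \<in> AU" "opnorm b0 = r powr of_int n0" using GU_A by metis
    have iff: "(r \<le> nz / opnorm b \<and> nz / opnorm b < 1) \<longleftrightarrow> b = b0" if b: "b \<in> AU" for b
    proof -
      obtain n :: int where n: "opnorm b = r powr of_int n" using A_GU[OF b] unfolding GU by auto
      show ?thesis
      proof
        assume "r \<le> nz / opnorm b \<and> nz / opnorm b < 1"
        hence "n = n0" unfolding n n0_def using shell_int[OF r nz] by blast
        hence "opnorm b = opnorm b0" using n b0 by simp
        thus "b = b0" using A_inj b b0(1) by blast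
      next
        assume "b = b0"
        thus "r \<le> nz / opnorm b \<and> nz / opnorm b < 1" using b0 shell_int[OF r nz, of n0] n0_def by simp
      qed
    qed
    have "(\<integral>\<^sup>+b. kk (norm z / opnorm b) \<partial>count_space AU) = (\<integral>\<^sup>+b. indicator {b0} b \<partial>count_space AU)"
      by (rule nn_integral_cong) (use iff in \<open>auto simp: kk_def indicator_def nz_def\<close>)
    also have "\<dots> = emeasure (count_space AU) {b0}" by (rule nn_integral_indicator) (use b0 in simp)
    also have "\<dots> = 1" using b0 by (simp add: emeasure_count_space_finite)
    finally show "(\<integral>\<^sup>+b. kk (norm z / opnorm b) \<partial>count_space AU) = 1" .
  qed
qed

end

(* ---- h/PH ---- *)
lemma lin_l: "linear (\<lambda>X::real^'n^'n. c ** X)"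
  by (rule linearI) (simp_all add: matrix_matrix_mult_def vec_eq_iff sum_distrib_left algebra_simps sum.distrib)
lemma lin_r: "linear (\<lambda>X::real^'n^'n. X ** c)"
  by (rule linearI) (simp_all add: matrix_matrix_mult_def vec_eq_iff sum_distrib_left algebra_simps sum.distrib)

lemma mm_scaleR_r: "(c::real^'n^'n) ** (r *\<^sub>R X) = r *\<^sub>R (c ** X)"
  by (simp add: matrix_matrix_mult_def vec_eq_iff sum_distrib_left algebra_simps)
lemma mm_scaleR_l: "(r *\<^sub>R X) ** (c::real^'n^'n) = r *\<^sub>R (X ** c)"
  by (simp add: matrix_matrix_mult_def vec_eq_iff sum_distrib_left algebra_simps)

lemma norm_le_opnorm: "norm (X::real^'n^'n) \<le> real CARD('n) * real CARD('n) * opnorm X"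
proof -
  have c: "\<bar>X $ i $ j\<bar> \<le> opnorm X" for i j
    using component_le_onorm[of "(*v) X" i j] unfolding opnorm_def
    by (simp add: matrix_of_matrix_vector_mul matrix_vector_mul_linear)
  have "norm X \<le> (\<Sum>i\<in>UNIV. norm (X $ i))" unfolding norm_vec_def by (rule L2_set_le_sum) simp
  also have "\<dots> \<le> (\<Sum>i\<in>(UNIV::'n set). \<Sum>j\<in>(UNIV::'n set). \<bar>X $ i $ j\<bar>)"
    by (rule sum_mono) (rule norm_le_l1_cart[of "X $ _", simplified])
  also have "\<dots> \<le> (\<Sum>i\<in>(UNIV::'n set). \<Sum>j\<in>(UNIV::'n set). opnorm X)"
    by (intro sum_mono c)
  also have "\<dots> = real CARD('n) * real CARD('n) * opnorm X" by simp
  finally show ?thesis .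
qed

lemma opnorm_mm: "opnorm ((X::real^'n^'n) ** Y) \<le> opnorm X * opnorm Y"
proof -
  have "onorm ((*v) X \<circ> (*v) Y) \<le> onorm ((*v) X) * onorm ((*v) Y)"
    by (rule onorm_compose) (rule matrix_vector_mul_bounded_linear)+
  moreover have "(*v) X \<circ> (*v) Y = (*v) (X ** Y)" by (rule ext) (simp add: matrix_vector_mul_assoc)
  ultimately show ?thesis unfolding opnorm_def by simp
qed

lemma opnorm_matpow: "opnorm (matpow (M::real^'n^'n) k) \<le> opnorm M ^ k"
proof (induction k)
  case 0 thus ?case by (simp add: opnorm_id)
next
  case (Suc k)
  have "opnorm (matpow M (Suc k)) \<le> opnorm M * opnorm (matpow M k)" by (simp add: opnorm_mm)
  also have "\<dots> \<le> opnorm M * opnorm M ^ k"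
    by (rule mult_left_mono[OF Suc]) (simp add: opnorm_def onorm_pos_le matrix_vector_mul_bounded_linear)
  finally show ?case by simp
qed

lemma matexp_summable: "summable (\<lambda>k. (1 / fact k) *\<^sub>R matpow (M::real^'n^'n) k)"
proof (rule summable_comparison_test)
  let ?C = "real CARD('n) * real CARD('n)"
  show "summable (\<lambda>k. ?C * (inverse (fact k) * opnorm M ^ k))"
    by (rule summable_mult) (rule summable_exp)
  show "\<exists>N. \<forall>k\<ge>N. norm ((1 / fact k) *\<^sub>R matpow M k) \<le> ?C * (inverse (fact k) * opnorm M ^ k)"
  proof (intro exI allI impI)
    fix k :: nat
    have "norm ((1 / fact k) *\<^sub>R matpow M k) = inverse (fact k) * norm (matpow M k)"
      by (simp add: field_simps)
    also have "\<dots> \<le> inverse (fact k) * (?C * opnorm (matpow M k))"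
      by (rule mult_left_mono[OF norm_le_opnorm]) simp
    also have "\<dots> \<le> inverse (fact k) * (?C * opnorm M ^ k)"
      by (intro mult_left_mono opnorm_matpow) auto
    finally show "norm ((1 / fact k) *\<^sub>R matpow M k) \<le> ?C * (inverse (fact k) * opnorm M ^ k)"
      by (simp add: ac_simps)
  qed
qed

lemma matpow_comm: "c ** M = M ** c \<Longrightarrow> c ** matpow (M::real^'n^'n) k = matpow M k ** c"
proof (induction k)
  case 0 thus ?case by (simp add: matrix_mul_lid matrix_mul_rid)
next
  case (Suc k)
  have "c ** matpow M (Suc k) = (c ** M) ** matpow M k" by (simp add: matrix_mul_assoc)
  also have "\<dots> = (M ** c) ** matpow M k" using Suc.prems by simp
  also have "\<dots> = M ** (c ** matpow M k)" by (simp add: matrix_mul_assoc)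
  also have "\<dots> = M ** (matpow M k ** c)" using Suc by simp
  also have "\<dots> = matpow M (Suc k) ** c" by (simp add: matrix_mul_assoc)
  finally show ?case .
qed

lemma matexp_comm:
  assumes "c ** M = M ** (c::real^'n^'n)"
  shows "c ** matexp M = matexp M ** c"
proof -
  have bl: "bounded_linear (\<lambda>X::real^'n^'n. c ** X)" "bounded_linear (\<lambda>X::real^'n^'n. X ** c)"
    using lin_l lin_r linear_conv_bounded_linear by blast+
  have "c ** matexp M = (\<Sum>k. c ** ((1 / fact k) *\<^sub>R matpow M k))"
    unfolding matexp_def by (rule bounded_linear.suminf[OF bl(1) matexp_summable])
  also have "\<dots> = (\<Sum>k. ((1 / fact k) *\<^sub>R matpow M k) ** c)"
    using matpow_comm[OF assms] by (simp add: mm_scaleR_r mm_scaleR_l)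
  also have "\<dots> = matexp M ** c"
    unfolding matexp_def by (rule bounded_linear.suminf[OF bl(2) matexp_summable, symmetric])
  finally show ?thesis .
qed

lemma matrpow_comm:
  assumes "c ** Q = Q ** (c::real^'n^'n)"
  shows "c ** matrpow t Q = matrpow t Q ** c"
  unfolding matrpow_def using assms
  by (intro matexp_comm) (simp add: mm_scaleR_r mm_scaleR_l)

(* ---- i/PI ---- *)
locale cgrp = grp U AU for U AU :: "(real^'n^'n) set" +
  assumes GUc: "GU U = {0<..}" and AU_closed: "closed AU"
begin

definition "psi t = (THE a. a \<in> AU \<and> opnorm a = t)"

lemma psi: assumes "t > 0" shows "psi t \<in> AU" "opnorm (psi t) = t"
proof -
  obtain a where a: "a \<in> AU" "opnorm a = t" using GU_A[of t] GUc assms by auto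
  have "\<exists>!a. a \<in> AU \<and> opnorm a = t" using a A_inj by blast
  hence "psi t \<in> AU \<and> opnorm (psi t) = t" unfolding psi_def by (rule theI')
  thus "psi t \<in> AU" "opnorm (psi t) = t" by auto
qed

lemma psi_of: "a \<in> AU \<Longrightarrow> psi (opnorm a) = a"
  using psi[of "opnorm a"] pos[OF A_U] A_inj by blast

lemma psi_mult: "a0 \<in> AU \<Longrightarrow> t > 0 \<Longrightarrow> a0 ** psi t = psi (opnorm a0 * t)"
proof -
  assume a0: "a0 \<in> AU" and t: "t > 0"
  have "a0 ** psi t \<in> AU" using A_mult a0 psi(1)[OF t] by blast
  moreover have "opnorm (a0 ** psi t) = opnorm a0 * t"
    using opnorm_mult[OF A_U[OF a0] A_U[OF psi(1)[OF t]]] psi(2)[OF t] by simp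
  ultimately show ?thesis using psi_of by metis
qed

lemma psi_inj: "s > 0 \<Longrightarrow> t > 0 \<Longrightarrow> psi s = psi t \<Longrightarrow> s = t"
  using psi(2) by metis

lemma K_compact: assumes "0 < m" shows "compact {a \<in> AU. m \<le> opnorm a \<and> opnorm a \<le> M}"
proof -
  have "closed {a \<in> AU. m \<le> opnorm a \<and> opnorm a \<le> M}"
  proof -
    have "closed {a::real^'n^'n. m \<le> opnorm a \<and> opnorm a \<le> M}"
      using opnorm_cont by (intro closed_Collect_conj closed_Collect_le) (auto intro: continuous_on_const)
    hence "closed (AU \<inter> {a::real^'n^'n. m \<le> opnorm a \<and> opnorm a \<le> M})" using AU_closed by blast
    moreover have "AU \<inter> {a::real^'n^'n. m \<le> opnorm a \<and> opnorm a \<le> M} = {a \<in> AU. m \<le> opnorm a \<and> opnorm a \<le> M}" by auto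
    ultimately show ?thesis by simp
  qed
  moreover have "bounded {a \<in> AU. m \<le> opnorm a \<and> opnorm a \<le> M}"
  proof (rule boundedI)
    fix a assume "a \<in> {a \<in> AU. m \<le> opnorm a \<and> opnorm a \<le> M}"
    hence "opnorm a \<le> M" by simp
    thus "norm a \<le> real CARD('n) * real CARD('n) * M"
      using norm_le_opnorm[of a] by (smt (verit) mult_left_mono of_nat_0_le_iff zero_le_mult_iff)
  qed
  ultimately show ?thesis by (simp add: compact_eq_bounded_closed)
qed

lemma psi_cont_Icc: assumes "0 < m" shows "continuous_on {m..M} psi"
proof -
  let ?K = "{a \<in> AU. m \<le> opnorm a \<and> opnorm a \<le> M}"
  have "continuous_on (opnorm ` ?K) psi"
    by (rule continuous_on_inv[OF continuous_on_subset[OF opnorm_cont] K_compact[OF assms]])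
       (auto simp: psi_of)
  moreover have "opnorm ` ?K = {m..M}"
  proof
    show "opnorm ` ?K \<subseteq> {m..M}" by auto
    show "{m..M} \<subseteq> opnorm ` ?K"
    proof
      fix t assume t: "t \<in> {m..M}"
      hence "t > 0" using assms by simp
      thus "t \<in> opnorm ` ?K" using psi[of t] t by (intro image_eqI[of _ _ "psi t"]) auto
    qed
  qed
  ultimately show ?thesis by simp
qed

lemma psi_cont: "continuous_on {0<..} psi"
proof -
  have "isCont psi t" if t: "t > 0" for t
  proof (rule continuous_on_interior[OF psi_cont_Icc[of "t/2" "2*t"]])
    show "0 < t / 2" using t by simp
    show "t \<in> interior {t / 2..2 * t}" using t by simp
  qed
  thus ?thesis by (simp add: continuous_on_eq_continuous_at)
qed

definition "psi0 t = (if t \<in> {0<..} then psi t else mat 1)"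

lemma psi0_meas[measurable]: "psi0 \<in> borel_measurable borel"
  unfolding psi0_def
  by (rule borel_measurable_continuous_on_if) (auto intro: psi_cont continuous_on_const)

definition "Dm = density (restrict_space lborel {0<..}) (\<lambda>t::real. ennreal (1/t))"
definition "Hc = distr Dm borel psi"

lemma Hc_eq: "haar_cont AU = Hc"
  unfolding haar_cont_def Hc_def Dm_def psi_def ..

lemma sets_Dm: "sets Dm = sets (restrict_space borel {0<..})"
  unfolding Dm_def by (simp add: sets_restrict_space_cong[OF sets_lborel])

lemma space_Dm: "space Dm = {0<..}"
  unfolding Dm_def by simp

lemma psi_meas_Dm: "psi \<in> measurable Dm borel"
  using measurable_cong_sets[OF sets_Dm refl] borel_measurable_continuous_on_restrict[OF psi_cont] by blast

lemma sets_Hc[simp]: "sets Hc = sets borel" unfolding Hc_def by simp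
lemma space_Hc[simp]: "space Hc = UNIV" unfolding Hc_def by simp

lemma nnDm:
  assumes f: "f \<in> borel_measurable borel"
  shows "(\<integral>\<^sup>+t. f t \<partial>Dm) = (\<integral>\<^sup>+t. ennreal (1/t) * f t * indicator {0<..} t \<partial>lborel)"
proof -
  have fm: "f \<in> borel_measurable (restrict_space lborel {0<..})"
    using f by (simp add: measurable_restrict_space1)
  have "(\<integral>\<^sup>+t. f t \<partial>Dm) = (\<integral>\<^sup>+t. ennreal (1/t) * f t \<partial>restrict_space lborel {0<..})"
    unfolding Dm_def by (rule nn_integral_density) (use fm in \<open>auto simp: measurable_restrict_space1\<close>)
  also have "\<dots> = (\<integral>\<^sup>+t\<in>{0<..}. ennreal (1/t) * f t \<partial>lborel)"
    by (rule nn_integral_restrict_space) simp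
  finally show ?thesis .
qed

lemma nnHc:
  assumes F: "F \<in> borel_measurable borel"
  shows "(\<integral>\<^sup>+a. F a \<partial>Hc) = (\<integral>\<^sup>+t. ennreal (1/t) * F (psi0 t) * indicator {0<..} t \<partial>lborel)"
proof -
  have "(\<integral>\<^sup>+a. F a \<partial>Hc) = (\<integral>\<^sup>+t. F (psi t) \<partial>Dm)"
    unfolding Hc_def by (rule nn_integral_distr[OF psi_meas_Dm]) (use F in simp)
  also have "\<dots> = (\<integral>\<^sup>+t. F (psi0 t) \<partial>Dm)"
    by (rule nn_integral_cong) (simp add: space_Dm psi0_def)
  also have "\<dots> = (\<integral>\<^sup>+t. ennreal (1/t) * F (psi0 t) * indicator {0<..} t \<partial>lborel)"
    by (rule nnDm) (use F in measurable)
  finally show ?thesis .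
qed

lemma scale_lborel:
  assumes s: "s > 0" and f: "f \<in> borel_measurable borel"
  shows "(\<integral>\<^sup>+t. ennreal (1/t) * f (s * t) * indicator {0<..} t \<partial>lborel)
       = (\<integral>\<^sup>+t. ennreal (1/t) * f t * indicator {0<..} t \<partial>lborel)"
proof -
  define G where "G u = ennreal (1/u) * f u * indicator {0<..} u" for u :: real
  have Gm: "G \<in> borel_measurable borel" unfolding G_def using f by measurable
  have "(\<integral>\<^sup>+t. G t \<partial>lborel) = ennreal \<bar>s\<bar> * (\<integral>\<^sup>+x. G (0 + s * x) \<partial>lborel)"
    by (rule nn_integral_real_affine[OF Gm]) (use s in simp)
  also have "\<dots> = (\<integral>\<^sup>+x. ennreal s * G (s * x) \<partial>lborel)"
    using s by (subst nn_integral_cmult) (use Gm in auto)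
  also have "\<dots> = (\<integral>\<^sup>+t. ennreal (1/t) * f (s * t) * indicator {0<..} t \<partial>lborel)"
  proof (rule nn_integral_cong)
    fix x :: real
    show "ennreal s * G (s * x) = ennreal (1/x) * f (s * x) * indicator {0<..} x"
    proof (cases "x > 0")
      case True
      have "ennreal s * ennreal (1 / (s * x)) = ennreal (1/x)"
        using s True by (simp add: ennreal_mult[symmetric])
      thus ?thesis unfolding G_def using True s by (simp add: mult.assoc[symmetric])
    next
      case False
      hence "\<not> s * x > 0" using s by (simp add: zero_less_mult_iff)
      thus ?thesis unfolding G_def using False by simp
    qed
  qed
  finally show ?thesis unfolding G_def by simp
qed

lemma Hc_mult: "(\<lambda>a. a0 ** a) \<in> measurable Hc Hc"
proof -
  have "continuous_on UNIV (\<lambda>a::real^'n^'n. a0 ** a)"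
    unfolding matrix_matrix_mult_def by (intro continuous_on_vec_lambda continuous_intros)
  hence "(\<lambda>a::real^'n^'n. a0 ** a) \<in> borel_measurable borel" by (rule borel_measurable_continuous_onI)
  thus ?thesis using measurable_cong_sets[OF sets_Hc sets_Hc] by simp
qed

lemma Hc_inv:
  assumes a0: "a0 \<in> AU"
  shows "distr Hc Hc (\<lambda>a. a0 ** a) = Hc"
proof (rule measure_eqI)
  show "sets (distr Hc Hc ((**) a0)) = sets Hc" by simp
  fix X assume "X \<in> sets (distr Hc Hc ((**) a0))"
  hence X: "X \<in> sets borel" by simp
  have mm: "(\<lambda>a::real^'n^'n. a0 ** a) \<in> borel_measurable borel"
    using Hc_mult measurable_cong_sets[OF sets_Hc sets_Hc] by simp
  have s: "opnorm a0 > 0" using pos A_U a0 by auto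
  have "emeasure (distr Hc Hc ((**) a0)) X = emeasure Hc ((\<lambda>a. a0 ** a) -` X)"
    by (subst emeasure_distr[OF Hc_mult]) (use X in auto)
  also have "\<dots> = (\<integral>\<^sup>+a. indicator ((\<lambda>a. a0 ** a) -` X) a \<partial>Hc)"
    by (rule nn_integral_indicator[symmetric]) (use measurable_sets[OF mm X] in simp)
  also have "\<dots> = (\<integral>\<^sup>+a. indicator X (a0 ** a) \<partial>Hc)"
    by (rule nn_integral_cong) (simp add: indicator_def)
  also have "\<dots> = (\<integral>\<^sup>+t. ennreal (1/t) * indicator X (a0 ** psi0 t) * indicator {0<..} t \<partial>lborel)"
    by (rule nnHc) (use X mm in measurable)
  also have "\<dots> = (\<integral>\<^sup>+t. ennreal (1/t) * indicator X (psi0 (opnorm a0 * t)) * indicator {0<..} t \<partial>lborel)"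
    by (rule nn_integral_cong) (use s a0 in \<open>auto simp: psi0_def psi_mult indicator_def\<close>)
  also have "\<dots> = (\<integral>\<^sup>+t. ennreal (1/t) * indicator X (psi0 t) * indicator {0<..} t \<partial>lborel)"
    by (rule scale_lborel[OF s, where f="\<lambda>u. indicator X (psi0 u)"]) (use X in measurable)
  also have "\<dots> = (\<integral>\<^sup>+a. indicator X a \<partial>Hc)"
    by (rule nnHc[symmetric]) (use X in measurable)
  also have "\<dots> = emeasure Hc X" by (rule nn_integral_indicator) (use X in simp)
  finally show "emeasure (distr Hc Hc ((**) a0)) X = emeasure Hc X" .
qed

lemma Hc_AE: "AE a in Hc. a \<in> AU"
proof -
  have "{x \<in> space borel. x \<in> AU} \<in> sets borel" using AU_closed by (simp add: borel_closed)
  hence "(AE a in Hc. a \<in> AU) \<longleftrightarrow> (AE t in Dm. psi t \<in> AU)"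
    unfolding Hc_def by (rule AE_distr_iff[OF psi_meas_Dm])
  moreover have "AE t in Dm. psi t \<in> AU" by (rule AE_I2) (simp add: space_Dm psi)
  ultimately show ?thesis by simp
qed

lemma Hc_fin: assumes "0 < a" shows "emeasure Hc (psi ` {a..b}) < \<infinity>"
proof -
  have cl: "closed (psi ` {a..b})"
    by (rule compact_imp_closed, rule compact_continuous_image[OF psi_cont_Icc[OF assms]]) simp
  hence m: "psi ` {a..b} \<in> sets borel" by (simp add: borel_closed)
  have "emeasure Hc (psi ` {a..b}) = (\<integral>\<^sup>+x. indicator (psi ` {a..b}) x \<partial>Hc)"
    using m by (simp add: nn_integral_indicator)
  also have "\<dots> = (\<integral>\<^sup>+t. ennreal (1/t) * indicator (psi ` {a..b}) (psi0 t) * indicator {0<..} t \<partial>lborel)"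
    by (rule nnHc) (use m in measurable)
  also have "\<dots> \<le> (\<integral>\<^sup>+t. ennreal (1/a) * indicator {a..b} t \<partial>lborel)"
  proof (rule nn_integral_mono)
    fix t :: real
    show "ennreal (1/t) * indicator (psi ` {a..b}) (psi0 t) * indicator {0<..} t \<le> ennreal (1/a) * indicator {a..b} t"
    proof (cases "t > 0 \<and> psi t \<in> psi ` {a..b}")
      case True
      then obtain u where u: "u \<in> {a..b}" "psi t = psi u" by auto
      have "t = u" using psi_inj[of t u] u True assms by auto
      hence "t \<in> {a..b}" using u by simp
      moreover have "1/t \<le> 1/a" using \<open>t \<in> {a..b}\<close> assms by (simp add: frac_le)
      ultimately show ?thesis using True by (simp add: psi0_def ennreal_leI)
    next
      case False thus ?thesis by (auto simp: psi0_def indicator_def)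
    qed
  qed
  also have "\<dots> = ennreal (1/a) * emeasure lborel {a..b}"
    by (subst nn_integral_cmult_indicator) auto
  also have "\<dots> < \<infinity>"
  proof -
    have "emeasure lborel {a..b} < \<infinity>" by (simp add: emeasure_lborel_Icc_eq)
    thus ?thesis by (simp add: ennreal_mult_less_top)
  qed
  finally show ?thesis .
qed

lemma Hc_sf: "sigma_finite_measure Hc"
proof -
  define A where "A = insert (UNIV - AU) (range (\<lambda>k::nat. psi ` {1 / real (Suc k) .. real (Suc k)}))"
  show ?thesis
  proof (unfold_locales, intro exI[of _ A] conjI ballI)
    show "countable A" unfolding A_def by simp
    show "A \<subseteq> sets Hc"
    proof
      fix X assume "X \<in> A"
      then consider "X = UNIV - AU" | k where "X = psi ` {1 / real (Suc k) .. real (Suc k)}"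
        unfolding A_def by blast
      thus "X \<in> sets Hc"
      proof cases
        case 1 thus ?thesis using AU_closed by (simp add: borel_open open_Diff)
      next
        case (2 k)
        have "closed X" unfolding 2
          by (rule compact_imp_closed, rule compact_continuous_image[OF psi_cont_Icc]) auto
        thus ?thesis by (simp add: borel_closed)
      qed
    qed
    show "\<Union> A = space Hc"
    proof -
      have "x \<in> \<Union> A" for x
      proof (cases "x \<in> AU")
        case True
        define t where "t = opnorm x"
        have t: "t > 0" using pos A_U True t_def by auto
        obtain k where k1: "inverse (real (Suc k)) < t" using reals_Archimedean t by blast
        obtain k2 where k2: "t < real k2" using reals_Archimedean2 by blast
        define K where "K = max k k2"
        have "1 / real (Suc K) \<le> t"
        proof -
          have "1 / real (Suc K) \<le> 1 / real (Suc k)" unfolding K_def by (simp add: frac_le)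
          moreover have "1 / real (Suc k) < t" using k1 by (simp add: inverse_eq_divide)
          ultimately show ?thesis by linarith
        qed
        moreover have "t \<le> real (Suc K)"
        proof -
          have "real k2 \<le> real K" unfolding K_def by simp
          thus ?thesis using k2 by linarith
        qed
        ultimately have tin: "t \<in> {1 / real (Suc K) .. real (Suc K)}" by simp
        have xt: "x = psi t" using psi_of[OF True] t_def by simp
        have xi: "x \<in> psi ` {1 / real (Suc K) .. real (Suc K)}" unfolding xt by (rule imageI[OF tin])
        have mem: "psi ` {1 / real (Suc K) .. real (Suc K)} \<in> A" unfolding A_def by (intro insertI2 rangeI)
        show ?thesis by (rule UnionI[OF mem xi])
      next
        case False
        hence xi: "x \<in> UNIV - AU" by simp
        have mem: "UNIV - AU \<in> A" unfolding A_def by (rule insertI1)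
        show ?thesis by (rule UnionI[OF mem xi])
      qed
      thus ?thesis by auto
    qed
    fix X assume "X \<in> A"
    then consider "X = UNIV - AU" | k where "X = psi ` {1 / real (Suc k) .. real (Suc k)}"
      unfolding A_def by blast
    thus "emeasure Hc X \<noteq> \<infinity>"
    proof cases
      case 1
      have m: "UNIV - AU \<in> sets Hc" using AU_closed by (simp add: borel_open open_Diff)
      have e: "{x \<in> space Hc. \<not> x \<in> AU} = UNIV - AU" by auto
      have "emeasure Hc (UNIV - AU) = 0"
        using AE_iff_measurable[OF m e] Hc_AE by blast
      thus ?thesis using 1 by simp
    next
      case (2 k)
      have "emeasure Hc X < \<infinity>" unfolding 2 by (rule Hc_fin) simp
      thus ?thesis by simp
    qed
  qed
qed

end

(* ---- j/PJ ---- *)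
context cgrp begin

lemma cont_main:
  fixes \<nu> :: "(real^'n) measure" and \<alpha> :: real and Q :: "real^'n^'n"
  assumes L: "levy_measure \<nu>" and alpha_pos: "\<alpha> > 0"
    and commQ: "\<forall>c\<in>CU U. Q ** c = c ** Q" and AUQ: "AU = (\<lambda>t. matrpow t Q) ` {0<..}"
  shows "(\<forall>g\<in>U. \<forall>B\<in>sets borel. 0 \<notin> B \<longrightarrow>
             emeasure \<nu> ((\<lambda>x. g *v x) ` B) = ennreal (opnorm g powr (- \<alpha>)) * emeasure \<nu> B)
     \<longleftrightarrow>
     (\<exists>\<rho>. sets \<rho> = sets borel \<and> finite_measure \<rho> \<and> emeasure \<rho> (UNIV - sphere 0 1) = 0
        \<and> (\<forall>c\<in>CU U. \<forall>B\<in>sets borel. emeasure \<rho> ((\<lambda>x. c *v x) ` B) = emeasure \<rho> B)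
        \<and> (\<forall>f::real^'n \<Rightarrow> real. integrable \<nu> f \<longrightarrow>
             (\<integral>x. f x \<partial>\<nu>) = (\<integral>a. (\<integral>x. f (a *v x) * opnorm a powr (- \<alpha>) \<partial>\<rho>) \<partial>haar_cont AU)))"
proof -
  have Hg: "hgrp U AU Hc"
  proof (rule hgrp.intro[OF grp_axioms], rule hgrp_axioms.intro)
    show "sigma_finite_measure Hc" by (rule Hc_sf)
    show "AE a in Hc. a \<in> AU" by (rule Hc_AE)
    show "\<And>a0. a0 \<in> AU \<Longrightarrow> distr Hc Hc ((**) a0) = Hc" by (rule Hc_inv)
    show "\<And>a0. a0 \<in> AU \<Longrightarrow> (**) a0 \<in> Hc \<rightarrow>\<^sub>M Hc" by (rule Hc_mult)
    have "sets (Hc \<Otimes>\<^sub>M (borel :: (real^'n) measure)) = sets (borel \<Otimes>\<^sub>M (borel :: (real^'n) measure))"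
      by (rule sets_pair_measure_cong) auto
    also have "\<dots> = sets borel" by (simp only: borel_prod)
    finally have "measurable (Hc \<Otimes>\<^sub>M (borel :: (real^'n) measure)) (borel :: (real^'n) measure) = measurable borel borel"
      by (rule measurable_cong_sets) simp
    thus "(\<lambda>p. fst p *v snd p) \<in> borel_measurable (Hc \<Otimes>\<^sub>M (borel :: (real^'n) measure))"
      using mv_meas by simp
    show "opnorm \<in> borel_measurable Hc" using opnorm_meas measurable_cong_sets[OF sets_Hc refl] by blast
  qed
  interpret hgrp U AU Hc by (rule Hg)
  define kk :: "real \<Rightarrow> ennreal" where "kk t = indicator {1..exp 1} t" for t
  define \<Psi> where "\<Psi> t = psi0 (1/t)" for t :: real
  have ns: "sets \<nu> = sets borel" by (rule levy_sets[OF L])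
  have Psi_pos: "\<Psi> t = psi (1/t)" "\<Psi> t \<in> AU" "opnorm (\<Psi> t) = 1/t" if "t > 0" for t
    using that psi[of "1/t"] unfolding \<Psi>_def psi0_def by auto
  have commA: "a ** c = c ** a" if a: "a \<in> AU" and c: "c \<in> CU U" for a c
  proof -
    obtain s where "a = matrpow s Q" using a AUQ by auto
    thus ?thesis using matrpow_comm[of c Q s] commQ c by simp
  qed
  show ?thesis unfolding Hc_eq
  proof (rule assemble[OF L, where kk=kk and \<Psi>=\<Psi>])
    show "kk \<in> borel_measurable borel" unfolding kk_def by measurable
    show "kk 0 = 0" unfolding kk_def by simp
    show "\<Psi> \<in> borel_measurable borel" unfolding \<Psi>_def by measurable
    show "\<And>t. kk t \<noteq> 0 \<Longrightarrow> \<Psi> t \<in> AU"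
    proof -
      fix t assume "kk t \<noteq> 0"
      hence "t \<ge> 1" unfolding kk_def by (auto simp: indicator_def split: if_splits)
      thus "\<Psi> t \<in> AU" using Psi_pos by simp
    qed
    show "\<And>c t. c \<in> CU U \<Longrightarrow> \<Psi> t ** c = c ** \<Psi> t"
    proof -
      fix c t assume c: "c \<in> CU U"
      show "\<Psi> t ** c = c ** \<Psi> t"
      proof (cases "t > 0")
        case True thus ?thesis using commA[OF Psi_pos(2)[OF True] c] by simp
      next
        case False
        hence "\<Psi> t = mat 1" unfolding \<Psi>_def psi0_def by (auto simp: divide_nonpos_pos)
        thus ?thesis by (simp add: matrix_mul_lid matrix_mul_rid)
      qed
    qed
    show "sphere (0::real^'n) 1 \<in> sets borel" by (simp add: borel_closed)
    show "\<And>y. kk (norm y) \<noteq> 0 \<Longrightarrow> \<Psi> (norm y) *v y \<in> sphere 0 1"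
    proof -
      fix y :: "real^'n" assume "kk (norm y) \<noteq> 0"
      hence y1: "norm y \<ge> 1" unfolding kk_def by (auto simp: indicator_def split: if_splits)
      hence p: "norm y > 0" by linarith
      have "norm (\<Psi> (norm y) *v y) = 1"
        using normv[OF A_U[OF Psi_pos(2)[OF p]]] Psi_pos(3)[OF p] p by simp
      thus "\<Psi> (norm y) *v y \<in> sphere 0 1" by simp
    qed
    show "(\<integral>\<^sup>+y. kk (norm y) * ennreal (opnorm (\<Psi> (norm y)) powr - \<alpha>) \<partial>\<nu>) < \<infinity>"
    proof -
      have "(\<integral>\<^sup>+y. kk (norm y) * ennreal (opnorm (\<Psi> (norm y)) powr - \<alpha>) \<partial>\<nu>)
          \<le> (\<integral>\<^sup>+y. ennreal (exp 1 powr \<alpha>) * indicator {y. 1 \<le> norm y} y \<partial>\<nu>)"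
      proof (rule nn_integral_mono)
        fix y :: "real^'n"
        show "kk (norm y) * ennreal (opnorm (\<Psi> (norm y)) powr - \<alpha>) \<le> ennreal (exp 1 powr \<alpha>) * indicator {y. 1 \<le> norm y} y"
        proof (cases "1 \<le> norm y \<and> norm y \<le> exp 1")
          case True
          hence p: "norm y > 0" by linarith
          have "opnorm (\<Psi> (norm y)) powr - \<alpha> = norm y powr \<alpha>"
            using Psi_pos(3)[OF p] p by (simp add: powr_minus powr_divide)
          also have "\<dots> \<le> exp 1 powr \<alpha>" using True alpha_pos by (intro powr_mono2) auto
          finally show ?thesis using True by (simp add: kk_def ennreal_leI)
        next
          case False thus ?thesis by (auto simp: kk_def indicator_def)
        qed
      qed
      also have "\<dots> = ennreal (exp 1 powr \<alpha>) * emeasure \<nu> {y. 1 \<le> norm y}"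
        by (rule nn_integral_cmult_indicator) (simp add: ns)
      also have "\<dots> < \<infinity>" using levy_fin[OF L, of 1] by (simp add: ennreal_mult_less_top)
      finally show ?thesis .
    qed
    fix z :: "real^'n" assume z: "z \<noteq> 0"
    define nz where "nz = norm z"
    have nz: "nz > 0" using z nz_def by simp
    have e1: "(\<integral>\<^sup>+b. kk (norm z / opnorm b) \<partial>Hc)
        = (\<integral>\<^sup>+t. ennreal (1/t) * kk (nz / opnorm (psi0 t)) * indicator {0<..} t \<partial>lborel)"
      unfolding nz_def by (rule nnHc) (unfold kk_def, measurable)
    have e2: "(\<integral>\<^sup>+t. ennreal (1/t) * kk (nz / opnorm (psi0 t)) * indicator {0<..} t \<partial>lborel) = (\<integral>\<^sup>+t. ennreal (1/t) * indicator {nz / exp 1 .. nz} t \<partial>lborel)"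
    proof (rule nn_integral_cong)
      fix t :: real
      show "ennreal (1/t) * kk (nz / opnorm (psi0 t)) * indicator {0<..} t = ennreal (1/t) * indicator {nz / exp 1 .. nz} t"
      proof (cases "t > 0")
        case True
        have "opnorm (psi0 t) = t" using psi[OF True] True unfolding psi0_def by simp
        moreover have "(1 \<le> nz / t \<and> nz / t \<le> exp 1) \<longleftrightarrow> (nz / exp 1 \<le> t \<and> t \<le> nz)"
          using True by (auto simp: field_simps)
        ultimately show ?thesis using True by (simp add: kk_def indicator_def)
      next
        case False
        hence "\<not> (nz / exp 1 \<le> t)" using nz by (smt (verit) divide_pos_pos exp_gt_zero)
        thus ?thesis using False by (simp add: indicator_def)
      qed
    qed
    have e3: "(\<integral>\<^sup>+t. ennreal (1/t) * indicator {nz / exp 1 .. nz} t \<partial>lborel) = (\<integral>\<^sup>+t\<in>{nz / exp 1 .. nz}. ennreal (1/t) \<partial>lborel)"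
      by (simp add: mult.commute)
    have e4: "(\<integral>\<^sup>+t\<in>{nz / exp 1 .. nz}. ennreal (1/t) \<partial>lborel) = ennreal (ln nz - ln (nz / exp 1))"
    proof (rule nn_integral_FTC_Icc)
      show "(\<lambda>t::real. 1 / t) \<in> borel_measurable borel" by measurable
      fix x :: real assume x: "x \<in> {nz / exp 1..nz}"
      hence "x > 0" using nz by (smt (verit) atLeastAtMost_iff divide_pos_pos exp_gt_zero)
      thus "(ln has_real_derivative 1 / x) (at x)" by (rule DERIV_ln_divide)
      show "0 \<le> 1 / x" using \<open>x > 0\<close> by simp
    next
      show "nz / exp 1 \<le> nz" using nz by (simp add: divide_le_eq)
    qed
    have e5: "ln nz - ln (nz / exp 1) = 1" using nz by (simp add: ln_div)
    show "(\<integral>\<^sup>+b. kk (norm z / opnorm b) \<partial>Hc) = 1" using e1 e2 e3 e4 e5 by simp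
  qed
qed

end

(* ---- k/PK ---- *)
theorem mainTheorem12:
  fixes U AU :: "(real^'n^'n) set"
    and \<alpha> r :: real
    and A Q :: "real^'n^'n"
    and S :: "(real^'n) set"
    and H :: "(real^'n^'n) measure"
    and \<nu> :: "(real^'n) measure"
  assumes U_closed: "closed U"
    and U_subgroup: "matrix_subgroup U"
    and U_sim: "U \<subseteq> similarity_matrices"
    and U_not_orth: "\<not> U \<subseteq> orthogonal_matrices"
    and alpha_pos: "\<alpha> > 0"
    and levy: "levy_measure \<nu>"
    and AU_closed: "closed AU"
    and AU_subgroup: "matrix_subgroup AU"
    and AU_sub: "AU \<subseteq> U"
    and semidirect: "\<forall>u\<in>U. \<exists>a\<in>AU. \<exists>c\<in>CU U. u = a ** c"
    and AU_CU: "AU \<inter> CU U = {mat 1}"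
    and cases_UA:
      "(0 < r \<and> r < 1 \<and> GU U = range (\<lambda>n::int. r powr of_int n)
          \<and> opnorm A = r \<and> AU = range (matpowi A)
          \<and> S = {x. r \<le> norm x \<and> norm x < 1} \<and> H = count_space AU)
       \<or> (GU U = {0<..} \<and> (\<forall>c\<in>CU U. Q ** c = c ** Q)
          \<and> AU = (\<lambda>t. matrpow t Q) ` {0<..}
          \<and> S = sphere 0 1 \<and> H = haar_cont AU)"
  shows "(\<forall>g\<in>U. \<forall>B\<in>sets borel. 0 \<notin> B \<longrightarrow>
             emeasure \<nu> ((\<lambda>x. g *v x) ` B) = ennreal (opnorm g powr (- \<alpha>)) * emeasure \<nu> B)
     \<longleftrightarrow>
     (\<exists>\<rho>. sets \<rho> = sets borel \<and> finite_measure \<rho> \<and> emeasure \<rho> (UNIV - S) = 0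
        \<and> (\<forall>c\<in>CU U. \<forall>B\<in>sets borel. emeasure \<rho> ((\<lambda>x. c *v x) ` B) = emeasure \<rho> B)
        \<and> (\<forall>f::real^'n \<Rightarrow> real. integrable \<nu> f \<longrightarrow>
             (\<integral>x. f x \<partial>\<nu>) = (\<integral>a. (\<integral>x. f (a *v x) * opnorm a powr (- \<alpha>) \<partial>\<rho>) \<partial>H)))"
proof -
  have G: "grp U AU"
  proof (rule grp.intro)
    show "simgrp U" by (rule simgrp.intro[OF U_subgroup U_sim])
    show "grp_axioms U AU" by (rule grp_axioms.intro[OF AU_subgroup AU_sub semidirect AU_CU])
  qed
  interpret grp U AU by (rule G)
  from cases_UA show ?thesis
  proof
    assume d: "0 < r \<and> r < 1 \<and> GU U = range (\<lambda>n::int. r powr of_int n)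
          \<and> opnorm A = r \<and> AU = range (matpowi A)
          \<and> S = {x. r \<le> norm x \<and> norm x < 1} \<and> H = count_space AU"
    hence S: "S = {x. r \<le> norm x \<and> norm x < 1}" and H: "H = count_space AU" by auto
    show ?thesis unfolding S H
      by (rule disc_main[OF levy]) (use d in auto)
  next
    assume c: "GU U = {0<..} \<and> (\<forall>c\<in>CU U. Q ** c = c ** Q)
          \<and> AU = (\<lambda>t. matrpow t Q) ` {0<..}
          \<and> S = sphere 0 1 \<and> H = haar_cont AU"
    hence S: "S = sphere 0 1" and H: "H = haar_cont AU" by auto
    have CG: "cgrp U AU" by (rule cgrp.intro[OF G], rule cgrp_axioms.intro) (use c AU_closed in auto)
    interpret cgrp U AU by (rule CG)
    show ?thesis unfolding S H
      by (rule cont_main[OF levy alpha_pos]) (use c in auto)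
  qed
qed

end
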